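(* Consider the deep linear ResNet setting described in the context, and assume that for every $N\ge1$ and $n\in\{1,\dots,N\}$, $\sqrt{\ell^N(0)}<\frac{m}{4\sqrt{2Me^3}}$ and $\|\theta_n^N(0)\|\le\frac14$; that there exists $C_0>0$ with $\|\theta_{n+1}^N(0)-\theta_n^N(0)\|\le\frac{C_0}{N}$ for all $N,n$; and that $\|\theta_n^N(0)-\theta_{2n}^{2N}(0)\|=O(\frac1N)$ as $N\to\infty$, uniformly in $n\in\{1,\dots,N\}$. Then for all $t\in\mathbb{R}_+$, $\|\theta_n^N(t)-\theta_{2n}^{2N}(t)\|=O(\frac1N)$ as $N\to\infty$, uniformly in $n\in\{1,\dots,N\}$.
   Context: Let $d\ge1$, $\Sigma\in\mathbb{R}^{d\times d}$ symmetric positive definite with largest eigenvalue $M>0$ and smallest eigenvalue $m>0$, and $B\in\mathbb{R}^{d\times d}$. For $A\in\mathbb{R}^{d\times d}$ put $\|A\|_\Sigma^2=\mathrm{Tr}(A\Sigma A^\top)$. For each integer $N\ge1$ and parameters $\theta_1^N,\dots,\theta_N^N\in\mathbb{R}^{d\times d}$, let $\Pi^N=(I_d+\frac{\theta_N^N}{N})\cdots(I_d+\frac{\theta_1^N}{N})$ and $L(\theta_1^N,\dots,\theta_N^N)=\|\Pi^N-B\|_\Sigma^2$. The parameters evolve by the rescaled gradient flow $\frac{d\theta_n^N}{dt}(t)=-N\nabla_{\theta_n^N}L(\theta_1^N(t),\dots,\theta_N^N(t))$ for $t\ge0$, and $\ell^N(t)=L(\theta_1^N(t),\dots,\theta_N^N(t))$.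 $\|\cdot\|$ denotes the spectral (operator) norm of matrices. *)

theory Defs
  imports "HOL-Analysis.Analysis"
begin

type_synonym 'd mat = "real^'d^'d"

definition mtrace :: "'d::finite mat \<Rightarrow> real" where
  "mtrace A = (\<Sum>i\<in>UNIV. A $ i $ i)"

definition sigma_sq :: "'d::finite mat \<Rightarrow> 'd mat \<Rightarrow> real" where
  "sigma_sq S A = mtrace (A ** S ** transpose A)"

fun piprod :: "nat \<Rightarrow> (nat \<Rightarrow> 'd::finite mat) \<Rightarrow> nat \<Rightarrow> 'd mat" where
  "piprod N th 0 = mat 1"
| "piprod N th (Suc k) = (mat 1 + (1 / real N) *\<^sub>R th (Suc k)) ** piprod N th k"

definition Pi_prod :: "nat \<Rightarrow> (nat \<Rightarrow> 'd::finite mat) \<Rightarrow> 'd mat" where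
  "Pi_prod N th = piprod N th N"

definition loss :: "'d::finite mat \<Rightarrow> 'd mat \<Rightarrow> nat \<Rightarrow> (nat \<Rightarrow> 'd mat) \<Rightarrow> real" where
  "loss S B N th = sigma_sq S (Pi_prod N th - B)"

definition is_eigenvalue :: "'d::finite mat \<Rightarrow> real \<Rightarrow> bool" where
  "is_eigenvalue A lam \<longleftrightarrow> (\<exists>v. v \<noteq> 0 \<and> A *v v = lam *\<^sub>R v)"

definition spec_norm :: "'d::finite mat \<Rightarrow> real" where
  "spec_norm A = onorm (\<lambda>x. A *v x)"

end

theory Submission
  imports Defs
begin
lemma mono_from_deriv:
  fixes f f' :: "real \<Rightarrow> real"
  assumes "0 \<le> t"
    and "\<And>s. s \<in> {0..t} \<Longrightarrow> (f has_vector_derivative f' s) (at s within {0..})"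
    and "\<And>s. s \<in> {0..t} \<Longrightarrow> f' s \<le> 0"
  shows "f t \<le> f 0"
proof -
  have "(f' has_integral (f t - f 0)) {0..t}"
    by (rule fundamental_theorem_of_calculus[OF assms(1)])
       (auto intro: has_vector_derivative_within_subset[OF assms(2)])
  then have "((\<lambda>s. - f' s) has_integral - (f t - f 0)) {0..t}"
    using has_integral_neg by blast
  then have "0 \<le> - (f t - f 0)"
    by (rule has_integral_nonneg) (use assms(3) in auto)
  then show ?thesis by simp
qed

lemma drift_bound:
  fixes f f' :: "real \<Rightarrow> 'a::euclidean_space" and g G :: "real \<Rightarrow> real"
  assumes "0 \<le> t"
    and "\<And>s. s \<in> {0..t} \<Longrightarrow> (f has_vector_derivative f' s) (at s within {0..})"
    and "\<And>s. s \<in> {0..t} \<Longrightarrow> (G has_vector_derivative g s) (at s within {0..})"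
    and "\<And>s. s \<in> {0..t} \<Longrightarrow> norm (f' s) \<le> g s"
  shows "norm (f t - f 0) \<le> G t - G 0"
proof -
  have i1: "(f' has_integral (f t - f 0)) {0..t}"
    by (rule fundamental_theorem_of_calculus[OF assms(1)])
       (auto intro: has_vector_derivative_within_subset[OF assms(2)])
  have i2: "(g has_integral (G t - G 0)) {0..t}"
    by (rule fundamental_theorem_of_calculus[OF assms(1)])
       (auto intro: has_vector_derivative_within_subset[OF assms(3)])
  have "norm (integral {0..t} f') \<le> integral {0..t} g"
    by (rule integral_norm_bound_integral) (use i1 i2 assms(4) in auto)
  then show ?thesis using i1 i2 by (simp add: integral_unique)
qed

lemma const_drift_bound:
  fixes f f' :: "real \<Rightarrow> 'a::euclidean_space"
  assumes "0 \<le> t"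
    and "\<And>s. s \<in> {0..t} \<Longrightarrow> (f has_vector_derivative f' s) (at s within {0..})"
    and "\<And>s. s \<in> {0..t} \<Longrightarrow> norm (f' s) \<le> K"
  shows "norm (f t - f 0) \<le> K * t"
proof -
  have "norm (f t - f 0) \<le> (\<lambda>s. K * s) t - (\<lambda>s. K * s) 0"
    by (rule drift_bound[OF assms(1,2), of "\<lambda>s. K * s" "\<lambda>s. K"])
       (auto intro!: derivative_eq_intros assms(3))
  then show ?thesis by simp
qed

lemma spec_bl: "bounded_linear (\<lambda>x. (A::real^'n^'n) *v x)"
  by simp

lemma spec_norm_apply: "norm (A *v x) \<le> spec_norm A * norm x"
  unfolding spec_norm_def by (rule onorm[OF spec_bl])

lemma spec_norm_nonneg: "0 \<le> spec_norm A"
  unfolding spec_norm_def by (rule onorm_pos_le[OF spec_bl])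

lemma spec_norm_le: "(\<And>x. norm (A *v x) \<le> c * norm x) \<Longrightarrow> spec_norm A \<le> c"
  unfolding spec_norm_def by (rule onorm_le)

lemma spec_norm_add: "spec_norm (A + B) \<le> spec_norm A + spec_norm B"
proof (rule spec_norm_le)
  fix x
  have "norm ((A + B) *v x) = norm (A *v x + B *v x)" by (simp add: matrix_vector_mult_add_rdistrib)
  also have "\<dots> \<le> norm (A *v x) + norm (B *v x)" by (rule norm_triangle_ineq)
  also have "\<dots> \<le> spec_norm A * norm x + spec_norm B * norm x"
    by (intro add_mono spec_norm_apply)
  finally show "norm ((A + B) *v x) \<le> (spec_norm A + spec_norm B) * norm x" by (simp add: algebra_simps)
qed

lemma spec_norm_minus: "spec_norm (- A) = spec_norm A"
proof -
  have "(\<lambda>x. (- A) *v x) = (\<lambda>x. - (A *v x))"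
    by (auto simp: matrix_vector_mult_def vec_eq_iff sum_negf)
  then show ?thesis unfolding spec_norm_def by (simp add: onorm_neg)
qed

lemma spec_norm_diff: "spec_norm (A - B) \<le> spec_norm A + spec_norm B"
  using spec_norm_add[of A "- B"] by (simp add: spec_norm_minus)

lemma spec_norm_commute: "spec_norm (A - B) = spec_norm (B - A)"
  using spec_norm_minus[of "A - B"] by simp

lemma spec_norm_scale: "spec_norm (c *\<^sub>R A) = \<bar>c\<bar> * spec_norm A"
proof -
  have "(\<lambda>x. (c *\<^sub>R A) *v x) = (\<lambda>x. c *\<^sub>R (A *v x))"
    by (auto simp: matrix_vector_mult_def vec_eq_iff sum_distrib_left algebra_simps)
  then show ?thesis unfolding spec_norm_def by (simp add: onorm_scaleR)
qed

lemma spec_norm_mult: "spec_norm ((A::real^'n^'n) ** B) \<le> spec_norm A * spec_norm B"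
proof (rule spec_norm_le)
  fix x
  have "norm ((A ** B) *v x) = norm (A *v (B *v x))" by (simp add: matrix_vector_mul_assoc)
  also have "\<dots> \<le> spec_norm A * norm (B *v x)" by (rule spec_norm_apply)
  also have "\<dots> \<le> spec_norm A * (spec_norm B * norm x)"
    by (intro mult_left_mono spec_norm_apply spec_norm_nonneg)
  finally show "norm ((A ** B) *v x) \<le> spec_norm A * spec_norm B * norm x" by simp
qed

lemma spec_norm_id: "spec_norm (mat 1 :: real^'n^'n) \<le> 1"
  by (rule spec_norm_le) simp

lemma spec_norm_transpose: "spec_norm (transpose (A::real^'n^'n)) \<le> spec_norm A"
proof (rule spec_norm_le)
  fix x
  let ?y = "transpose A *v x"
  have "(norm ?y)^2 = ?y \<bullet> ?y" by (simp add: power2_norm_eq_inner)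
  also have "\<dots> = (A *v ?y) \<bullet> x"
    by (simp add: dot_lmul_matrix[symmetric] inner_commute)
  also have "\<dots> \<le> norm (A *v ?y) * norm x" by (rule norm_cauchy_schwarz)
  also have "\<dots> \<le> spec_norm A * norm ?y * norm x"
    by (intro mult_right_mono spec_norm_apply) auto
  finally have "norm ?y * norm ?y \<le> (spec_norm A * norm x) * norm ?y"
    by (simp add: power2_eq_square algebra_simps)
  then show "norm ?y \<le> spec_norm A * norm x"
    by (cases "norm ?y = 0") (auto simp: spec_norm_nonneg)
qed

lemma norm_mat_sq: "(norm (A::real^'n^'n))^2 = (\<Sum>i\<in>UNIV. (norm (A $ i))^2)"
  by (simp add: power2_norm_eq_inner inner_vec_def)

lemma norm_vec_sq: "(norm (x::real^'n))^2 = (\<Sum>i\<in>UNIV. (x $ i)^2)"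
  unfolding power2_norm_eq_inner inner_vec_def by (simp add: power2_eq_square)

lemma norm_mat_sq2: "(norm (A::real^'n^'n))^2 = (\<Sum>i\<in>UNIV. \<Sum>j\<in>UNIV. (A $ i $ j)^2)"
  by (simp add: norm_mat_sq norm_vec_sq)

lemma norm_transpose: "norm (transpose (A::real^'n^'n)) = norm A"
proof -
  have "(norm (transpose A))^2 = (norm A)^2"
    unfolding norm_mat_sq2 transpose_def by (simp, rule sum.swap)
  then show ?thesis by (simp add: power2_eq_iff_nonneg)
qed

lemma norm_mat_sq_col: "(norm (A::real^'n^'n))^2 = (\<Sum>j\<in>UNIV. (norm (column j A))^2)"
proof -
  have "(norm A)^2 = (norm (transpose A))^2" by (simp add: norm_transpose)
  also have "\<dots> = (\<Sum>j\<in>UNIV. (norm (transpose A $ j))^2)" by (rule norm_mat_sq)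
  finally show ?thesis by (simp add: transpose_def column_def)
qed

lemma spec_le_norm: "spec_norm (A::real^'n^'n) \<le> norm A"
proof (rule spec_norm_le)
  fix x
  have "(norm (A *v x))^2 = (\<Sum>i\<in>UNIV. (A $ i \<bullet> x)^2)"
    by (simp add: norm_vec_sq matrix_vector_mul_component)
  also have "\<dots> \<le> (\<Sum>i\<in>UNIV. (norm (A $ i) * norm x)^2)"
    by (intro sum_mono) (metis Cauchy_Schwarz_ineq2 abs_ge_zero power2_abs power_mono)
  also have "\<dots> = (norm A * norm x)^2"
    by (simp add: norm_mat_sq power_mult_distrib sum_distrib_right)
  finally show "norm (A *v x) \<le> norm A * norm x"
    using power2_le_imp_le by fastforce
qed

lemma norm_le_spec: "norm (A::real^'n^'n) \<le> sqrt (real CARD('n)) * spec_norm A"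
proof -
  have "(norm A)^2 = (\<Sum>j\<in>UNIV. (norm (column j A))^2)" by (rule norm_mat_sq_col)
  also have "\<dots> \<le> (\<Sum>j\<in>(UNIV::'n set). (spec_norm A)^2)"
    by (intro sum_mono power_mono) (auto simp: spec_norm_def norm_column_le_onorm)
  also have "\<dots> = (sqrt (real CARD('n)) * spec_norm A)^2"
    by (simp add: power_mult_distrib)
  finally show ?thesis
    by (rule power2_le_imp_le) (simp add: spec_norm_nonneg)
qed

lemma column_mult: "column j (A ** B) = A *v column j B"
  by (simp add: column_def matrix_matrix_mult_def matrix_vector_mult_def vec_eq_iff)

lemma norm_mult_left: "norm ((A::real^'n^'n) ** (B::real^'n^'n)) \<le> spec_norm A * norm B"
proof -
  have "(norm (A ** B))^2 = (\<Sum>j\<in>UNIV. (norm (A *v column j B))^2)"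
    by (simp add: norm_mat_sq_col column_mult)
  also have "\<dots> \<le> (\<Sum>j\<in>UNIV. (spec_norm A * norm (column j B))^2)"
    by (intro sum_mono power_mono spec_norm_apply) auto
  also have "\<dots> = (spec_norm A * norm B)^2"
    by (simp add: norm_mat_sq_col power_mult_distrib sum_distrib_left)
  finally show ?thesis
    by (rule power2_le_imp_le) (simp add: spec_norm_nonneg)
qed

lemma norm_mult_left_low:
  assumes "\<And>v. c * norm v \<le> norm ((A::real^'n^'n) *v v)" "0 \<le> c"
  shows "c * norm (B::real^'n^'n) \<le> norm (A ** B)"
proof -
  have "(c * norm B)^2 = (\<Sum>j\<in>UNIV. (c * norm (column j B))^2)"
    by (simp add: norm_mat_sq_col power_mult_distrib sum_distrib_left)
  also have "\<dots> \<le> (\<Sum>j\<in>UNIV. (norm (A *v column j B))^2)"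
    by (intro sum_mono power_mono assms) (use assms in auto)
  also have "\<dots> = (norm (A ** B))^2"
    by (simp add: norm_mat_sq_col column_mult)
  finally show ?thesis
    by (rule power2_le_imp_le) simp
qed

lemma norm_mult_right: "norm ((B::real^'n^'n) ** (A::real^'n^'n)) \<le> norm B * spec_norm A"
proof -
  have "norm (B ** A) = norm (transpose A ** transpose B)"
    by (metis matrix_transpose_mul norm_transpose)
  also have "\<dots> \<le> spec_norm (transpose A) * norm (transpose B)" by (rule norm_mult_left)
  also have "\<dots> \<le> spec_norm A * norm B"
    by (simp add: norm_transpose mult_right_mono spec_norm_transpose)
  finally show ?thesis by (simp add: mult.commute)
qed

lemma mat_add_rdistrib: "((A::real^'n^'n) + B) ** C = A ** C + B ** C"
  by (simp add: matrix_matrix_mult_def vec_eq_iff sum.distrib algebra_simps)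

lemma mat_diff_rdistrib: "((A::real^'n^'n) - B) ** C = A ** C - B ** C"
  by (simp add: matrix_matrix_mult_def vec_eq_iff sum_subtractf algebra_simps)

lemma mat_diff_ldistrib: "(C::real^'n^'n) ** (A - B) = C ** A - C ** B"
  by (simp add: matrix_matrix_mult_def vec_eq_iff sum_subtractf algebra_simps)

lemma mat_scale_right: "(A::real^'n^'n) ** (k *\<^sub>R B) = k *\<^sub>R (A ** B)"
  by (simp add: matrix_scalar_ac scalar_matrix_assoc)

lemma mat_scale_left: "(k *\<^sub>R (A::real^'n^'n)) ** B = k *\<^sub>R (A ** B)"
  by (simp add: scalar_matrix_assoc)

lemma inner_mat: "(A::real^'n^'n) \<bullet> B = (\<Sum>i\<in>UNIV. \<Sum>j\<in>UNIV. A$i$j * B$i$j)"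
  by (simp add: inner_vec_def)

lemma inner_mult_left: "((A::real^'n^'n) ** (B::real^'n^'n)) \<bullet> (C::real^'n^'n) = B \<bullet> (transpose A ** C)"
proof -
  have "((A::real^'n^'n) ** B) \<bullet> C = (\<Sum>i\<in>UNIV. \<Sum>j\<in>UNIV. \<Sum>k\<in>UNIV. A$i$k * B$k$j * C$i$j)"
    unfolding inner_mat by (simp add: matrix_matrix_mult_def sum_distrib_right)
  also have "\<dots> = (\<Sum>i\<in>UNIV. \<Sum>k\<in>UNIV. \<Sum>j\<in>UNIV. A$i$k * B$k$j * C$i$j)"
    by (rule sum.cong[OF refl], rule sum.swap)
  also have "\<dots> = (\<Sum>k\<in>UNIV. \<Sum>i\<in>UNIV. \<Sum>j\<in>UNIV. A$i$k * B$k$j * C$i$j)"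
    by (rule sum.swap)
  also have "\<dots> = (\<Sum>k\<in>UNIV. \<Sum>j\<in>UNIV. \<Sum>i\<in>UNIV. A$i$k * B$k$j * C$i$j)"
    by (rule sum.cong[OF refl], rule sum.swap)
  also have "\<dots> = B \<bullet> (transpose A ** C)"
    by (simp add: inner_mat matrix_matrix_mult_def transpose_def sum_distrib_left mult_ac)
  finally show ?thesis .
qed

lemma inner_transpose: "transpose (A::real^'n^'n) \<bullet> transpose B = A \<bullet> B"
  unfolding inner_mat transpose_def by (simp, rule sum.swap)

lemma inner_mult_right: "((A::real^'n^'n) ** (B::real^'n^'n)) \<bullet> (C::real^'n^'n) = A \<bullet> (C ** transpose B)"
proof -
  have "(A ** B) \<bullet> C = transpose (A ** B) \<bullet> transpose C" by (rule inner_transpose[symmetric])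
  also have "\<dots> = (transpose B ** transpose A) \<bullet> transpose C" by (simp add: matrix_transpose_mul)
  also have "\<dots> = transpose A \<bullet> (B ** transpose C)" by (simp add: inner_mult_left)
  also have "\<dots> = transpose A \<bullet> transpose (C ** transpose B)" by (simp add: matrix_transpose_mul)
  also have "\<dots> = A \<bullet> (C ** transpose B)" by (simp add: inner_transpose)
  finally show ?thesis .
qed

lemma sigma_sq_inner: "sigma_sq (S::real^'n^'n) A = (A ** S) \<bullet> (A::real^'n^'n)"
  by (simp add: sigma_sq_def mtrace_def inner_mat matrix_matrix_mult_def transpose_def)

lemma row_mult: "((A::real^'n^'n) ** (B::real^'n^'n)) $ i = transpose B *v (A $ i)"
  by (simp add: matrix_matrix_mult_def matrix_vector_mult_def transpose_def vec_eq_iff mult.commute)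

lemma mult_bilinear: "bounded_bilinear (\<lambda>(A::real^'n^'n) (B::real^'n^'n). A ** B)"
proof -
  have "bilinear (\<lambda>(A::real^'n^'n) (B::real^'n^'n). A ** B)"
    unfolding bilinear_def
    by (auto intro!: linearI simp: matrix_add_ldistrib mat_add_rdistrib
        matrix_scalar_ac scalar_matrix_assoc)
  then show ?thesis by (simp add: bilinear_conv_bounded_bilinear)
qed

lemma inner_transpose_vec: "x \<bullet> ((A::real^'n^'n) *v y) = (transpose A *v x) \<bullet> y"
  by (simp add: dot_lmul_matrix[symmetric])

lemma psd_null:
  fixes A :: "real^'n^'n"
  assumes sym: "transpose A = A" and psd: "\<And>y. 0 \<le> y \<bullet> (A *v y)" and z: "x \<bullet> (A *v x) = 0"
  shows "A *v x = 0"
proof -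
  let ?y = "A *v x"
  define a where "a = ?y \<bullet> ?y"
  define c where "c = ?y \<bullet> (A *v ?y)"
  have c0: "0 \<le> c" unfolding c_def by (rule psd)
  have a0: "0 \<le> a" unfolding a_def by simp
  have key: "0 \<le> 2 * t * a + t^2 * c" for t
  proof -
    have "0 \<le> (x + t *\<^sub>R ?y) \<bullet> (A *v (x + t *\<^sub>R ?y))" by (rule psd)
    also have "\<dots> = x \<bullet> (A *v x) + t * (x \<bullet> (A *v ?y)) + t * (?y \<bullet> (A *v x)) + t^2 * c"
      by (simp add: c_def matrix_vector_right_distrib matrix_vector_mult_scaleR
          inner_add_left inner_add_right power2_eq_square algebra_simps)
    also have "x \<bullet> (A *v ?y) = ?y \<bullet> (A *v x)"
      by (metis inner_commute inner_transpose_vec sym)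
    finally show ?thesis using z by (simp add: a_def)
  qed
  have "a \<le> 0"
  proof (rule ccontr)
    assume "\<not> a \<le> 0"
    then have ap: "a > 0" by simp
    define e where "e = a / (c + 1)"
    have ep: "e > 0" using ap c0 by (simp add: e_def)
    have "0 \<le> 2 * (- e) * a + (- e)^2 * c" by (rule key)
    then have "e * (2 * a) \<le> e * (e * c)" by (simp add: power2_eq_square algebra_simps)
    then have "2 * a \<le> e * c" using ep by simp
    moreover have "e * c \<le> a"
    proof -
      have "e * c = a * (c / (c+1))" by (simp add: e_def)
      also have "\<dots> \<le> a * 1" using ap c0 by (intro mult_left_mono) auto
      finally show ?thesis by simp
    qed
    ultimately show False using ap by linarith
  qed
  then have "a = 0" using a0 by simp
  then show ?thesis by (simp add: a_def)
qed

lemma mat_vec_scal: "(mat c :: real^'n^'n) *v y = c *\<^sub>R y"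
proof -
  have "(\<Sum>j\<in>UNIV. (if i = j then c else 0) * y $ j) = c * y $ i" for i
    by (simp add: if_distrib[of "\<lambda>z. z * _"] cong: if_cong)
  then show ?thesis by (simp add: mat_def matrix_vector_mult_def vec_eq_iff)
qed

lemma rayleigh_extreme:
  fixes S :: "real^'n^'n"
  assumes sym: "transpose S = S"
  shows "\<exists>mu. is_eigenvalue S mu \<and> (\<forall>y. mu * (norm y)^2 \<le> y \<bullet> (S *v y))"
proof -
  let ?q = "\<lambda>x::real^'n. x \<bullet> (S *v x)"
  have cont: "continuous_on (sphere 0 1) ?q"
    by (intro continuous_intros)
  have ne: "sphere (0::real^'n) 1 \<noteq> {}" by simp
  obtain x0 where x0: "x0 \<in> sphere 0 1" and min: "\<And>y. y \<in> sphere 0 1 \<Longrightarrow> ?q x0 \<le> ?q y"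
    using continuous_attains_inf[OF compact_sphere ne cont] by blast
  define mu where "mu = ?q x0"
  have lb: "mu * (norm y)^2 \<le> ?q y" for y
  proof (cases "y = 0")
    case True then show ?thesis by simp
  next
    case False
    then have np: "norm y > 0" by simp
    have "(y /\<^sub>R norm y) \<in> sphere 0 1" using np by simp
    then have "mu \<le> ?q (y /\<^sub>R norm y)" using min mu_def by blast
    also have "?q (y /\<^sub>R norm y) = ?q y / (norm y)^2"
      by (simp add: matrix_vector_mult_scaleR power2_eq_square divide_inverse_commute)
    finally show ?thesis using np by (simp add: field_simps)
  qed
  define A where "A = S - mat mu"
  have Ay: "A *v y = S *v y - mu *\<^sub>R y" for y
    by (simp add: A_def matrix_vector_mult_diff_rdistrib mat_vec_scal)
  have symA: "transpose A = A"
    using sym by (simp add: A_def transpose_def vec_eq_iff mat_def)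
  have psd: "0 \<le> y \<bullet> (A *v y)" for y
    using lb[of y] by (simp add: Ay inner_diff_right power2_norm_eq_inner)
  have z: "x0 \<bullet> (A *v x0) = 0"
    using x0 by (simp add: Ay inner_diff_right mu_def power2_norm_eq_inner[symmetric])
  have "A *v x0 = 0" by (rule psd_null[OF symA psd z])
  then have "S *v x0 = mu *\<^sub>R x0" by (simp add: Ay)
  moreover have "x0 \<noteq> 0" using x0 by auto
  ultimately have "is_eigenvalue S mu" unfolding is_eigenvalue_def by blast
  then show ?thesis using lb by blast
qed

lemma rayleigh_lower:
  fixes S :: "real^'n^'n"
  assumes sym: "transpose S = S" and m_min: "\<forall>lam. is_eigenvalue S lam \<longrightarrow> m \<le> lam"
  shows "m * (norm x)^2 \<le> x \<bullet> (S *v x)"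
proof -
  obtain mu where "is_eigenvalue S mu" and lb: "\<And>y. mu * (norm y)^2 \<le> y \<bullet> (S *v y)"
    using rayleigh_extreme[OF sym] by blast
  then have "m \<le> mu" using m_min by blast
  then have "m * (norm x)^2 \<le> mu * (norm x)^2" by (intro mult_right_mono) auto
  then show ?thesis using lb[of x] by linarith
qed

lemma rayleigh_upper:
  fixes S :: "real^'n^'n"
  assumes sym: "transpose S = S" and M_max: "\<forall>lam. is_eigenvalue S lam \<longrightarrow> lam \<le> M"
  shows "x \<bullet> (S *v x) \<le> M * (norm x)^2"
proof -
  have symn: "transpose (- S) = - S" using sym by (simp add: transpose_def vec_eq_iff)
  obtain mu where ev: "is_eigenvalue (- S) mu" and lb: "\<And>y. mu * (norm y)^2 \<le> y \<bullet> ((- S) *v y)"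
    using rayleigh_extreme[OF symn] by blast
  have negS: "(- S) *v y = - (S *v y)" for y
    by (simp add: matrix_vector_mult_def vec_eq_iff sum_negf)
  from ev obtain v where "v \<noteq> 0" "(- S) *v v = mu *\<^sub>R v" unfolding is_eigenvalue_def by blast
  then have "S *v v = (- mu) *\<^sub>R v" by (simp add: negS) (metis minus_minus scaleR_minus_left)
  then have "is_eigenvalue S (- mu)" using \<open>v \<noteq> 0\<close> unfolding is_eigenvalue_def by blast
  then have "- mu \<le> M" using M_max by blast
  then have "- mu * (norm x)^2 \<le> M * (norm x)^2" by (intro mult_right_mono) auto
  moreover have "x \<bullet> (S *v x) \<le> - mu * (norm x)^2" using lb[of x] by (simp add: negS)
  ultimately show ?thesis by linarith
qed

lemma S_lower_norm:
  fixes S :: "real^'n^'n"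
  assumes sym: "transpose S = S" and m_min: "\<forall>lam. is_eigenvalue S lam \<longrightarrow> m \<le> lam"
  shows "m * norm x \<le> norm (S *v x)"
proof (cases "x = 0")
  case True then show ?thesis by simp
next
  case False
  have "m * (norm x)^2 \<le> x \<bullet> (S *v x)" by (rule rayleigh_lower[OF sym m_min])
  also have "\<dots> \<le> norm x * norm (S *v x)" by (rule norm_cauchy_schwarz)
  finally have "norm x * (m * norm x) \<le> norm x * norm (S *v x)" by (simp add: power2_eq_square mult_ac)
  then show ?thesis using False by simp
qed

lemma semi_cs:
  fixes S :: "real^'n^'n"
  assumes sym: "transpose S = S" and psd: "\<And>y. 0 \<le> y \<bullet> (S *v y)"
  shows "(x \<bullet> (S *v y))^2 \<le> (x \<bullet> (S *v x)) * (y \<bullet> (S *v y))"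
proof -
  have symm: "x \<bullet> (S *v y) = y \<bullet> (S *v x)" for x y
    by (metis inner_commute inner_transpose_vec sym)
  have exp: "0 \<le> x \<bullet> (S *v x) + 2 * t * (x \<bullet> (S *v y)) + t^2 * (y \<bullet> (S *v y))" for t
  proof -
    have "0 \<le> (x + t *\<^sub>R y) \<bullet> (S *v (x + t *\<^sub>R y))" by (rule psd)
    also have "\<dots> = x \<bullet> (S *v x) + t * (x \<bullet> (S *v y)) + t * (y \<bullet> (S *v x)) + t^2 * (y \<bullet> (S *v y))"
      by (simp add: matrix_vector_right_distrib matrix_vector_mult_scaleR
          inner_add_left inner_add_right power2_eq_square algebra_simps)
    finally show ?thesis using symm[of y x] by simp
  qed
  show ?thesis
  proof (cases "y \<bullet> (S *v y) = 0")
    case True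
    have "S *v y = 0" by (rule psd_null[OF sym psd True])
    then show ?thesis by (simp add: psd)
  next
    case False
    let ?b = "y \<bullet> (S *v y)" and ?c = "x \<bullet> (S *v y)" and ?a = "x \<bullet> (S *v x)"
    have bp: "?b > 0" using False psd[of y] by linarith
    have "0 \<le> ?a + 2 * (- ?c / ?b) * ?c + (- ?c / ?b)^2 * ?b" by (rule exp)
    also have "\<dots> = ?a - ?c^2 / ?b" using bp by (simp add: field_simps power2_eq_square)
    finally have "?c^2 / ?b \<le> ?a" by simp
    then show ?thesis using bp by (simp add: field_simps mult.commute)
  qed
qed

lemma S_sq_upper:
  fixes S :: "real^'n^'n"
  assumes sym: "transpose S = S" and M_max: "\<forall>lam. is_eigenvalue S lam \<longrightarrow> lam \<le> M"
    and psd: "\<And>y. 0 \<le> y \<bullet> (S *v y)"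
  shows "(norm (S *v x))^2 \<le> M * (x \<bullet> (S *v x))"
proof -
  let ?y = "S *v x"
  have e1: "x \<bullet> (S *v ?y) = ?y \<bullet> ?y" by (metis inner_transpose_vec sym)
  have "((norm ?y)^2)^2 = (x \<bullet> (S *v ?y))^2" by (simp add: e1 power2_norm_eq_inner)
  also have "\<dots> \<le> (x \<bullet> (S *v x)) * (?y \<bullet> (S *v ?y))" by (rule semi_cs[OF sym psd])
  also have "\<dots> \<le> (x \<bullet> (S *v x)) * (M * (norm ?y)^2)"
    by (intro mult_left_mono rayleigh_upper[OF sym M_max] psd)
  finally have "(norm ?y)^2 * (norm ?y)^2 \<le> (M * (x \<bullet> (S *v x))) * (norm ?y)^2"
    by (simp add: power2_eq_square mult_ac)
  then show ?thesis
  proof (cases "norm ?y = 0")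
    case True
    have "0 \<le> M"
    proof -
      obtain mu where "is_eigenvalue S mu" "\<And>y. mu * (norm y)^2 \<le> y \<bullet> (S *v y)"
        using rayleigh_extreme[OF sym] by blast
      then obtain v where v: "v \<noteq> 0" "S *v v = mu *\<^sub>R v" "mu \<le> M"
        using M_max unfolding is_eigenvalue_def by blast
      have "0 \<le> v \<bullet> (S *v v)" by (rule psd)
      then have "0 \<le> mu * (v \<bullet> v)" using v by simp
      moreover have "v \<bullet> v > 0" using v by simp
      ultimately have "0 \<le> mu" by (simp add: zero_le_mult_iff)
      then show ?thesis using v by simp
    qed
    then show ?thesis using True psd[of x] by simp
  next
    case False
    then have p: "(norm ?y)^2 > 0" by simp
    assume "(norm ?y)^2 * (norm ?y)^2 \<le> (M * (x \<bullet> (S *v x))) * (norm ?y)^2"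
    then show ?thesis using p mult_right_le_imp_le by blast
  qed
qed

lemma loss_rows:
  fixes S E :: "real^'n^'n"
  assumes sym: "transpose S = S"
  shows "sigma_sq S E = (\<Sum>i\<in>UNIV. (S *v (E$i)) \<bullet> E$i)"
    and "(norm (E ** S))^2 = (\<Sum>i\<in>UNIV. (norm (S *v (E$i)))^2)"
  by (simp_all add: sigma_sq_inner inner_vec_def row_mult sym norm_mat_sq)

lemma loss_lower:
  fixes S E :: "real^'n^'n"
  assumes sym: "transpose S = S" and m_min: "\<forall>lam. is_eigenvalue S lam \<longrightarrow> m \<le> lam"
    and m_pos: "m > 0"
  shows "m * sigma_sq S E \<le> (norm (E ** S))^2"
proof -
  have "m * ((S *v (E$i)) \<bullet> E$i) \<le> (norm (S *v (E$i)))^2" for i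
  proof -
    have "(S *v (E$i)) \<bullet> E$i \<le> norm (S *v (E$i)) * norm (E$i)" by (rule norm_cauchy_schwarz)
    then have "m * ((S *v (E$i)) \<bullet> E$i) \<le> norm (S *v (E$i)) * (m * norm (E$i))"
      using m_pos by (simp add: mult_left_mono mult_ac)
    also have "\<dots> \<le> norm (S *v (E$i)) * norm (S *v (E$i))"
      by (intro mult_left_mono S_lower_norm[OF sym m_min]) auto
    finally show ?thesis by (simp add: power2_eq_square)
  qed
  then show ?thesis
    unfolding loss_rows[OF sym] by (simp add: sum_distrib_left sum_mono)
qed

lemma loss_upper:
  fixes S E :: "real^'n^'n"
  assumes sym: "transpose S = S" and M_max: "\<forall>lam. is_eigenvalue S lam \<longrightarrow> lam \<le> M"
    and psd: "\<And>y. 0 \<le> y \<bullet> (S *v y)"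
  shows "(norm (E ** S))^2 \<le> M * sigma_sq S E"
proof -
  have "(norm (S *v (E$i)))^2 \<le> M * ((S *v (E$i)) \<bullet> E$i)" for i
    using S_sq_upper[OF sym M_max psd, of "E$i"] by (simp add: inner_commute)
  then show ?thesis
    unfolding loss_rows[OF sym] by (simp add: sum_distrib_left sum_mono)
qed

lemma loss_nonneg:
  fixes S E :: "real^'n^'n"
  assumes sym: "transpose S = S" and psd: "\<And>y. 0 \<le> y \<bullet> (S *v y)"
  shows "0 \<le> sigma_sq S E"
  unfolding loss_rows[OF sym] by (intro sum_nonneg) (simp add: inner_commute psd)

fun rprod :: "(nat \<Rightarrow> real^'d^'d) \<Rightarrow> nat \<Rightarrow> nat \<Rightarrow> real^'d^'d" where
  "rprod F a 0 = mat 1"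
| "rprod F a (Suc k) = F (a + Suc k) ** rprod F a k"

definition fac :: "nat \<Rightarrow> (nat \<Rightarrow> real^'d^'d) \<Rightarrow> nat \<Rightarrow> real^'d^'d" where
  "fac N th j = mat 1 + (1 / real N) *\<^sub>R th j"

definition lowb :: "real^'d^'d \<Rightarrow> real \<Rightarrow> bool" where
  "lowb A c \<longleftrightarrow> (\<forall>v. c * norm v \<le> norm (A *v v))"

lemma piprod_rprod: "piprod N th k = rprod (fac N th) 0 k"
  by (induction k) (simp_all add: fac_def)

lemma rprod_split: "rprod F a (k + l) = rprod F (a + k) l ** rprod F a k"
  by (induction l) (simp_all add: matrix_mul_assoc add.assoc)

lemma rprod_cong: "(\<And>j. a < j \<Longrightarrow> j \<le> a + k \<Longrightarrow> F j = G j) \<Longrightarrow> rprod F a k = rprod G a k"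
  by (induction k) auto

lemma rprod_pair: "rprod F (2*a) (2*k) = rprod (\<lambda>j. F (2*j) ** F (2*j - 1)) a k"
proof (induction k)
  case 0 then show ?case by simp
next
  case (Suc k)
  have "2 * Suc k = Suc (Suc (2*k))" by simp
  then have "rprod F (2*a) (2 * Suc k) = F (2*a + Suc (Suc (2*k))) ** (F (2*a + Suc (2*k)) ** rprod F (2*a) (2*k))"
    by simp
  also have "\<dots> = (F (2 * (a + Suc k)) ** F (2 * (a + Suc k) - 1)) ** rprod F (2*a) (2*k)"
    by (simp add: matrix_mul_assoc)
  finally show ?case using Suc by simp
qed

lemma rprod_spec:
  assumes "\<And>j. a < j \<Longrightarrow> j \<le> a + k \<Longrightarrow> spec_norm (F j) \<le> c" "0 \<le> c"
  shows "spec_norm (rprod F a k) \<le> c ^ k"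
  using assms(1)
proof (induction k)
  case 0 then show ?case by (simp add: spec_norm_id)
next
  case (Suc k)
  have "spec_norm (rprod F a (Suc k)) \<le> spec_norm (F (a + Suc k)) * spec_norm (rprod F a k)"
    by (simp add: spec_norm_mult)
  also have "\<dots> \<le> c * c ^ k"
    using Suc by (intro mult_mono) (auto simp: spec_norm_nonneg assms(2))
  finally show ?case by simp
qed

lemma lowb_mult: "lowb A a \<Longrightarrow> lowb B b \<Longrightarrow> 0 \<le> a \<Longrightarrow> lowb (A ** B) (a * b)"
  unfolding lowb_def
proof safe
  fix v
  assume A: "\<forall>v. a * norm v \<le> norm (A *v v)" and B: "\<forall>v. b * norm v \<le> norm (B *v v)" and "0 \<le> a"
  have "a * (b * norm v) \<le> a * norm (B *v v)" using B \<open>0 \<le> a\<close> by (simp add: mult_left_mono)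
  also have "\<dots> \<le> norm (A *v (B *v v))" using A by blast
  finally show "a * b * norm v \<le> norm ((A ** B) *v v)" by (simp add: matrix_vector_mul_assoc mult.assoc)
qed

lemma rprod_lowb:
  assumes "\<And>j. a < j \<Longrightarrow> j \<le> a + k \<Longrightarrow> lowb (F j) c" "0 \<le> c"
  shows "lowb (rprod F a k) (c ^ k)"
  using assms(1)
proof (induction k)
  case 0 then show ?case by (simp add: lowb_def)
next
  case (Suc k)
  then show ?case using lowb_mult[of "F (a + Suc k)" c "rprod F a k" "c^k"] assms(2) by simp
qed

lemma rprod_lowb_t:
  assumes "\<And>j. a < j \<Longrightarrow> j \<le> a + k \<Longrightarrow> lowb (transpose (F j)) c" "0 \<le> c"
  shows "lowb (transpose (rprod F a k)) (c ^ k)"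
  using assms(1)
proof (induction k)
  case 0 then show ?case by (simp add: lowb_def)
next
  case (Suc k)
  have "lowb (transpose (rprod F a k) ** transpose (F (a + Suc k))) (c^k * c)"
    using Suc assms(2) by (intro lowb_mult) auto
  then show ?case by (simp add: matrix_transpose_mul mult.commute)
qed

lemma spec_norm_zero[simp]: "spec_norm (0::real^'d^'d) = 0"
proof -
  have "spec_norm (0::real^'d^'d) \<le> 0" by (rule spec_norm_le) simp
  then show ?thesis using spec_norm_nonneg[of "0::real^'d^'d"] by linarith
qed

lemma rprod_tele:
  assumes "\<And>j. a < j \<Longrightarrow> j \<le> a + k \<Longrightarrow> spec_norm (F j) \<le> c \<and> spec_norm (G j) \<le> c" "1 \<le> c"
  shows "spec_norm (rprod F a k - rprod G a k) \<le> c ^ k * (\<Sum>j\<in>{a<..a+k}. spec_norm (F j - G j))"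
  using assms(1)
proof (induction k)
  case 0 then show ?case by simp
next
  case (Suc k)
  let ?F = "F (a + Suc k)" and ?G = "G (a + Suc k)"
  let ?s = "\<Sum>j\<in>{a<..a+k}. spec_norm (F j - G j)"
  have IH: "spec_norm (rprod F a k - rprod G a k) \<le> c ^ k * ?s" using Suc by auto
  have bG: "spec_norm (rprod G a k) \<le> c ^ k"
    using Suc.prems assms(2) by (intro rprod_spec) (force, linarith)
  have bF: "spec_norm ?F \<le> c" using Suc.prems by auto
  have eq: "rprod F a (Suc k) - rprod G a (Suc k) = ?F ** (rprod F a k - rprod G a k) + (?F - ?G) ** rprod G a k"
    by (simp add: mat_diff_ldistrib mat_diff_rdistrib)
  have "spec_norm (rprod F a (Suc k) - rprod G a (Suc k)) \<le>
        spec_norm ?F * spec_norm (rprod F a k - rprod G a k) + spec_norm (?F - ?G) * spec_norm (rprod G a k)"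
    unfolding eq by (rule order_trans[OF spec_norm_add add_mono[OF spec_norm_mult spec_norm_mult]])
  also have "\<dots> \<le> c * (c ^ k * ?s) + spec_norm (?F - ?G) * c ^ k"
    using assms(2) by (intro add_mono mult_mono IH bF bG) (auto simp: spec_norm_nonneg)
  also have "\<dots> = c ^ Suc k * ?s + c ^ k * spec_norm (?F - ?G)" by (simp add: mult_ac)
  also have "\<dots> \<le> c ^ Suc k * ?s + c ^ Suc k * spec_norm (?F - ?G)"
    using assms(2) by (intro add_left_mono mult_right_mono) (auto simp: spec_norm_nonneg)
  also have "\<dots> = c ^ Suc k * (\<Sum>j\<in>{a<..a + Suc k}. spec_norm (F j - G j))"
  proof -
    have "{a<..a + Suc k} = insert (a + Suc k) {a<..a+k}" by auto
    then show ?thesis by (simp add: distrib_left)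
  qed
  finally show ?case .
qed

lemma fac_spec: "spec_norm (fac N th j) \<le> 1 + spec_norm (th j) / real N"
  unfolding fac_def
  by (rule order_trans[OF spec_norm_add]) (simp add: spec_norm_scale spec_norm_id)

lemma fac_lowb: "lowb (fac N th j) (1 - spec_norm (th j) / real N)"
  unfolding lowb_def fac_def
proof
  fix v
  have "norm v - norm (((1 / real N) *\<^sub>R th j) *v v) \<le> norm ((mat 1 + (1 / real N) *\<^sub>R th j) *v v)"
    by (metis matrix_vector_mul_lid matrix_vector_mult_add_rdistrib norm_diff_ineq norm_minus_commute
        add_diff_cancel_left' diff_minus_eq_add norm_minus_cancel)
  moreover have "norm (((1 / real N) *\<^sub>R th j) *v v) \<le> spec_norm (th j) / real N * norm v"
    using spec_norm_apply[of "(1 / real N) *\<^sub>R th j" v] by (simp add: spec_norm_scale)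
  ultimately show "(1 - spec_norm (th j) / real N) * norm v \<le> norm ((mat 1 + (1 / real N) *\<^sub>R th j) *v v)"
    by (simp add: algebra_simps)
qed

lemma fac_lowb_t: "lowb (transpose (fac N th j)) (1 - spec_norm (th j) / real N)"
proof -
  have "transpose (fac N th j) = fac N (\<lambda>j. transpose (th j)) j"
    by (simp add: fac_def transpose_def vec_eq_iff mat_def)
  moreover have "lowb (fac N (\<lambda>j. transpose (th j)) j) (1 - spec_norm (th j) / real N)"
  proof -
    have "lowb (fac N (\<lambda>j. transpose (th j)) j) (1 - spec_norm (transpose (th j)) / real N)"
      by (rule fac_lowb)
    moreover have "1 - spec_norm (th j) / real N \<le> 1 - spec_norm (transpose (th j)) / real N"
      by (simp add: divide_right_mono spec_norm_transpose)
    ultimately show ?thesis unfolding lowb_def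
      by (meson mult_right_mono norm_ge_zero order_trans)
  qed
  ultimately show ?thesis by simp
qed

definition Up :: "nat \<Rightarrow> (nat \<Rightarrow> real^'d^'d) \<Rightarrow> nat \<Rightarrow> real^'d^'d" where
  "Up N th n = rprod (fac N th) n (N - n)"
definition Lo :: "nat \<Rightarrow> (nat \<Rightarrow> real^'d^'d) \<Rightarrow> nat \<Rightarrow> real^'d^'d" where
  "Lo N th n = rprod (fac N th) 0 (n - 1)"
definition Wm :: "real^'d^'d \<Rightarrow> real^'d^'d \<Rightarrow> nat \<Rightarrow> (nat \<Rightarrow> real^'d^'d) \<Rightarrow> real^'d^'d" where
  "Wm S B N th = (piprod N th N - B) ** S"
definition vel :: "real^'d^'d \<Rightarrow> real^'d^'d \<Rightarrow> nat \<Rightarrow> (nat \<Rightarrow> real^'d^'d) \<Rightarrow> nat \<Rightarrow> real^'d^'d" where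
  "vel S B N th n = (-2) *\<^sub>R (transpose (Up N th n) ** Wm S B N th ** transpose (Lo N th n))"

lemma prod_decomp:
  assumes "1 \<le> n" "n \<le> N"
  shows "piprod N th N = Up N th n ** fac N th n ** Lo N th n"
proof -
  have "piprod N th N = rprod (fac N th) 0 (n + (N - n))" using assms by (simp add: piprod_rprod)
  also have "\<dots> = Up N th n ** rprod (fac N th) 0 n" by (simp add: rprod_split Up_def)
  also have "rprod (fac N th) 0 n = fac N th n ** Lo N th n"
    using assms by (cases n) (auto simp: Lo_def)
  finally show ?thesis by (simp add: matrix_mul_assoc)
qed

lemma Up_upd: "n \<le> N \<Longrightarrow> Up N (\<lambda>k. if k = n then X else th k) n = Up N th n"
  unfolding Up_def by (rule rprod_cong) (auto simp: fac_def)

lemma Lo_upd: "Lo N (\<lambda>k. if k = n then X else th k) n = Lo N th n"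
  unfolding Lo_def by (rule rprod_cong) (auto simp: fac_def)

lemma lin_UL: "bounded_linear (\<lambda>X::real^'d^'d. c *\<^sub>R ((U::real^'d^'d) ** X ** (L::real^'d^'d)))"
proof -
  have "linear (\<lambda>X::real^'d^'d. c *\<^sub>R ((U::real^'d^'d) ** X ** (L::real^'d^'d)))"
    by (intro linearI) (simp_all add: matrix_add_ldistrib mat_add_rdistrib mat_scale_right mat_scale_left
        scaleR_add_right)
  then show ?thesis by (simp add: linear_conv_bounded_linear)
qed

lemma grad_loss:
  fixes S B :: "real^'d^'d"
  assumes sym: "transpose S = S" and n: "1 \<le> n" "n \<le> N"
  shows "((\<lambda>X. loss S B N (\<lambda>k. if k = n then X else th k)) has_derivative
     (\<lambda>H. ((2 / real N) *\<^sub>R (transpose (Up N th n) ** Wm S B N th ** transpose (Lo N th n))) \<bullet> H)) (at (th n))"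
proof -
  let ?U = "Up N th n" and ?L = "Lo N th n"
  define E0 where "E0 = ?U ** ?L - B"
  define f where "f = (\<lambda>X::real^'d^'d. (1 / real N) *\<^sub>R (?U ** X ** ?L))"
  have bl: "bounded_linear f" unfolding f_def by (rule lin_UL)
  have EX: "Pi_prod N (\<lambda>k. if k = n then X else th k) - B = E0 + f X" for X
  proof -
    have "Pi_prod N (\<lambda>k. if k = n then X else th k) = ?U ** (mat 1 + (1 / real N) *\<^sub>R X) ** ?L"
      unfolding Pi_prod_def using prod_decomp[OF n, of "\<lambda>k. if k = n then X else th k"] n
      by (simp add: Up_upd Lo_upd fac_def)
    also have "\<dots> = ?U ** ?L + f X"
      by (simp add: f_def matrix_add_ldistrib mat_add_rdistrib mat_scale_right mat_scale_left)
    finally show ?thesis by (simp add: E0_def)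
  qed
  have lossX: "loss S B N (\<lambda>k. if k = n then X else th k) = ((E0 + f X) ** S) \<bullet> (E0 + f X)" for X
    by (simp add: loss_def EX sigma_sq_inner)
  have dE: "((\<lambda>X. E0 + f X) has_derivative f) (at (th n))"
    using bounded_linear_imp_has_derivative[OF bl] by (rule has_derivative_add[OF has_derivative_const, simplified])
  have blS: "bounded_linear (\<lambda>Y::real^'d^'d. Y ** S)"
    by (rule bounded_bilinear.bounded_linear_left[OF mult_bilinear])
  have dES: "((\<lambda>X. (E0 + f X) ** S) has_derivative (\<lambda>H. f H ** S)) (at (th n))"
    using bounded_linear.has_derivative[OF blS dE] .
  have d: "((\<lambda>X. ((E0 + f X) ** S) \<bullet> (E0 + f X)) has_derivative
      (\<lambda>H. ((E0 + f (th n)) ** S) \<bullet> f H + (f H ** S) \<bullet> (E0 + f (th n)))) (at (th n))"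
    by (rule has_derivative_inner[OF dES dE])
  have W: "Wm S B N th = (E0 + f (th n)) ** S"
  proof -
    have "(\<lambda>k. if k = n then th n else th k) = th" by auto
    then show ?thesis using EX[of "th n"] by (simp add: Wm_def Pi_prod_def)
  qed
  have eq: "((E0 + f (th n)) ** S) \<bullet> f H + (f H ** S) \<bullet> (E0 + f (th n)) =
      ((2 / real N) *\<^sub>R (transpose ?U ** Wm S B N th ** transpose ?L)) \<bullet> H" for H
  proof -
    have "(f H ** S) \<bullet> (E0 + f (th n)) = f H \<bullet> Wm S B N th"
      by (simp add: inner_mult_right sym W)
    moreover have "f H \<bullet> Wm S B N th = (1 / real N) * (H \<bullet> (transpose ?U ** Wm S B N th ** transpose ?L))"
    proof -
      have "(?U ** H ** ?L) \<bullet> Wm S B N th = (?U ** H) \<bullet> (Wm S B N th ** transpose ?L)"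
        by (rule inner_mult_right)
      also have "\<dots> = H \<bullet> (transpose ?U ** (Wm S B N th ** transpose ?L))"
        by (rule inner_mult_left)
      finally show ?thesis by (simp add: f_def matrix_mul_assoc)
    qed
    ultimately show ?thesis
      by (simp add: W[symmetric] inner_commute[of "Wm S B N th"] inner_commute[of _ H])
  qed
  show ?thesis
    unfolding lossX using d by (simp add: eq)
qed

lemma mult_sum_right: "(A::real^'d^'d) ** sum (g::_\<Rightarrow>real^'d^'d) S = (\<Sum>i\<in>S. A ** g i)"
  by (rule bounded_bilinear.sum_right[OF mult_bilinear])

lemma inner_sum_right': "(A::real^'d^'d) \<bullet> sum (g::_\<Rightarrow>real^'d^'d) S = (\<Sum>i\<in>S. A \<bullet> g i)"
  by (rule inner_sum_right)

lemma flow_vel: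
  fixes S B :: "real^'d^'d" and theta :: "nat \<Rightarrow> nat \<Rightarrow> real \<Rightarrow> real^'d^'d"
  assumes sym: "transpose S = S"
    and flow: "\<forall>N\<ge>1. \<forall>n\<in>{1..N}. \<forall>t\<ge>0. \<exists>G.
        ((\<lambda>X. loss S B N (\<lambda>k. if k = n then X else theta N k t)) has_derivative (\<lambda>H. G \<bullet> H))
          (at (theta N n t))
        \<and> ((\<lambda>s. theta N n s) has_vector_derivative (- (real N *\<^sub>R G))) (at t within {0..})"
    and N: "1 \<le> N" and n: "1 \<le> n" "n \<le> N" and t: "0 \<le> t"
  shows "((\<lambda>s. theta N n s) has_vector_derivative vel S B N (\<lambda>k. theta N k t) n) (at t within {0..})"
proof -
  obtain G where G1: "((\<lambda>X. loss S B N (\<lambda>k. if k = n then X else theta N k t)) has_derivative (\<lambda>H. G \<bullet> H))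
          (at (theta N n t))"
    and G2: "((\<lambda>s. theta N n s) has_vector_derivative (- (real N *\<^sub>R G))) (at t within {0..})"
    using flow N n t by fastforce
  let ?G0 = "(2 / real N) *\<^sub>R (transpose (Up N (\<lambda>k. theta N k t) n) ** Wm S B N (\<lambda>k. theta N k t) **
              transpose (Lo N (\<lambda>k. theta N k t) n))"
  have "((\<lambda>X. loss S B N (\<lambda>k. if k = n then X else theta N k t)) has_derivative (\<lambda>H. ?G0 \<bullet> H))
          (at (theta N n t))"
    using grad_loss[OF sym n, where th="\<lambda>k. theta N k t" and B=B] by simp
  then have "(\<lambda>H. G \<bullet> H) = (\<lambda>H. ?G0 \<bullet> H)" using G1 has_derivative_unique by blast
  then have "G \<bullet> (G - ?G0) = ?G0 \<bullet> (G - ?G0)" by meson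
  then have "(G - ?G0) \<bullet> (G - ?G0) = 0" by (simp add: inner_diff_left)
  then have GG: "G = ?G0" by simp
  have "- (real N *\<^sub>R G) = vel S B N (\<lambda>k. theta N k t) n"
    using N by (simp add: GG vel_def)
  then show ?thesis using G2 by simp
qed

lemma rprod_deriv:
  assumes "\<And>j. a < j \<Longrightarrow> j \<le> a + k \<Longrightarrow> ((\<lambda>s. F s j) has_vector_derivative F' j) (at t within T)"
  shows "((\<lambda>s. rprod (F s) a k) has_vector_derivative
     (\<Sum>j\<in>{a<..a+k}. rprod (F t) j (a + k - j) ** F' j ** rprod (F t) a (j - a - 1))) (at t within T)"
  using assms
proof (induction k)
  case 0
  then show ?case by simp
next
  case (Suc k)
  let ?D = "\<Sum>j\<in>{a<..a+k}. rprod (F t) j (a + k - j) ** F' j ** rprod (F t) a (j - a - 1)"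
  have IH: "((\<lambda>s. rprod (F s) a k) has_vector_derivative ?D) (at t within T)"
    using Suc by auto
  have dF: "((\<lambda>s. F s (a + Suc k)) has_vector_derivative F' (a + Suc k)) (at t within T)"
    using Suc.prems by auto
  have d: "((\<lambda>s. F s (a + Suc k) ** rprod (F s) a k) has_vector_derivative
      (F t (a + Suc k) ** ?D + F' (a + Suc k) ** rprod (F t) a k)) (at t within T)"
    by (rule bounded_bilinear.has_vector_derivative[OF mult_bilinear dF IH])
  have e1: "F t (a + Suc k) ** ?D = (\<Sum>j\<in>{a<..a+k}. rprod (F t) j (a + Suc k - j) ** F' j ** rprod (F t) a (j - a - 1))"
  proof -
    have "F t (a + Suc k) ** ?D = (\<Sum>j\<in>{a<..a+k}. F t (a + Suc k) ** (rprod (F t) j (a + k - j) ** F' j ** rprod (F t) a (j - a - 1)))"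
      by (rule mult_sum_right)
    also have "\<dots> = (\<Sum>j\<in>{a<..a+k}. rprod (F t) j (a + Suc k - j) ** F' j ** rprod (F t) a (j - a - 1))"
    proof (rule sum.cong[OF refl])
      fix j assume "j \<in> {a<..a+k}"
      then have "a + Suc k - j = Suc (a + k - j)" and "j + Suc (a + k - j) = a + Suc k" by auto
      then show "F t (a + Suc k) ** (rprod (F t) j (a + k - j) ** F' j ** rprod (F t) a (j - a - 1)) =
                 rprod (F t) j (a + Suc k - j) ** F' j ** rprod (F t) a (j - a - 1)"
        by (simp add: matrix_mul_assoc)
    qed
    finally show ?thesis .
  qed
  have "{a<..a + Suc k} = insert (a + Suc k) {a<..a+k}" by auto
  then have e2: "(\<Sum>j\<in>{a<..a + Suc k}. rprod (F t) j (a + Suc k - j) ** F' j ** rprod (F t) a (j - a - 1)) =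
     F' (a + Suc k) ** rprod (F t) a k + (\<Sum>j\<in>{a<..a+k}. rprod (F t) j (a + Suc k - j) ** F' j ** rprod (F t) a (j - a - 1))"
    by simp
  show ?case using d by (simp only: rprod.simps e1 e2 add.commute)
qed

lemma hvd_cscale:
  assumes "(g has_vector_derivative g') F"
  shows "((\<lambda>x. c *\<^sub>R g x) has_vector_derivative c *\<^sub>R g') F"
proof -
  have "((\<lambda>x. c *\<^sub>R g x) has_derivative (\<lambda>h. c *\<^sub>R (h *\<^sub>R g'))) F"
    using assms unfolding has_vector_derivative_def by (rule has_derivative_scaleR_right)
  then show ?thesis unfolding has_vector_derivative_def by (simp add: mult.commute)
qed

lemma loss_deriv:
  fixes S B :: "real^'d^'d" and Th :: "nat \<Rightarrow> real \<Rightarrow> real^'d^'d"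
  assumes sym: "transpose S = S" and N: "1 \<le> N"
    and dv: "\<And>n. 1 \<le> n \<Longrightarrow> n \<le> N \<Longrightarrow>
       ((\<lambda>s. Th n s) has_vector_derivative vel S B N (\<lambda>k. Th k t) n) (at t within T)"
  shows "((\<lambda>s. loss S B N (\<lambda>k. Th k s)) has_vector_derivative
     (- (1 / real N) * (\<Sum>n\<in>{1..N}. (norm (vel S B N (\<lambda>k. Th k t) n))^2))) (at t within T)"
proof -
  let ?th = "\<lambda>k. Th k t"
  define V where "V n = vel S B N ?th n" for n
  define F where "F s = fac N (\<lambda>k. Th k s)" for s
  define F' where "F' j = (1 / real N) *\<^sub>R V j" for j
  have dF: "((\<lambda>s. F s j) has_vector_derivative F' j) (at t within T)" if "0 < j" "j \<le> 0 + N" for j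
  proof -
    have "((\<lambda>s. (1 / real N) *\<^sub>R Th j s) has_vector_derivative F' j) (at t within T)"
      unfolding F'_def V_def by (rule hvd_cscale) (use dv that in auto)
    then show ?thesis unfolding F_def fac_def
      by (subst add.commute) (simp add: has_vector_derivative_add_const)
  qed
  define P' where "P' = (\<Sum>j\<in>{0<..0+N}. rprod (F t) j (0 + N - j) ** F' j ** rprod (F t) 0 (j - 0 - 1))"
  have dP: "((\<lambda>s. rprod (F s) 0 N) has_vector_derivative P') (at t within T)"
    unfolding P'_def by (rule rprod_deriv) (rule dF)
  define E where "E s = rprod (F s) 0 N - B" for s
  have dE: "(E has_vector_derivative P') (at t within T)"
    unfolding E_def using dP by (simp add: has_vector_derivative_diff_const)
  have dES: "((\<lambda>s. E s ** S) has_vector_derivative (E t ** 0 + P' ** S)) (at t within T)"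
    by (rule bounded_bilinear.has_vector_derivative[OF mult_bilinear dE has_vector_derivative_const])
  have dl: "((\<lambda>s. (E s ** S) \<bullet> E s) has_vector_derivative
      ((E t ** S) \<bullet> P' + (E t ** 0 + P' ** S) \<bullet> E t)) (at t within T)"
    by (rule bounded_bilinear.has_vector_derivative[OF bounded_bilinear_inner dES dE])
  have lossE: "loss S B N (\<lambda>k. Th k s) = (E s ** S) \<bullet> E s" for s
    by (simp add: loss_def Pi_prod_def piprod_rprod sigma_sq_inner E_def F_def)
  have W: "Wm S B N ?th = E t ** S"
    by (simp add: Wm_def piprod_rprod E_def F_def)
  have "(E t ** S) \<bullet> P' + (E t ** 0 + P' ** S) \<bullet> E t = 2 * (Wm S B N ?th \<bullet> P')"
  proof -
    have "(P' ** S) \<bullet> E t = P' \<bullet> (E t ** S)" using inner_mult_right[of P' S "E t"] sym by simp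
    then show ?thesis by (simp add: W inner_commute[of P'])
  qed
  also have "Wm S B N ?th \<bullet> P' = (\<Sum>j\<in>{1..N}. Wm S B N ?th \<bullet> (Up N ?th j ** F' j ** Lo N ?th j))"
  proof -
    have "{0<..0+N} = {1..N}" by auto
    then show ?thesis
      by (simp add: P'_def inner_sum_right' Up_def Lo_def F_def)
  qed
  also have "\<dots> = (\<Sum>j\<in>{1..N}. - (1 / (2 * real N)) * (norm (V j))^2)"
  proof (rule sum.cong[OF refl])
    fix j
    have "Wm S B N ?th \<bullet> (Up N ?th j ** F' j ** Lo N ?th j) =
          (Up N ?th j ** F' j ** Lo N ?th j) \<bullet> Wm S B N ?th" by (rule inner_commute)
    also have "\<dots> = (Up N ?th j ** F' j) \<bullet> (Wm S B N ?th ** transpose (Lo N ?th j))"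
      by (rule inner_mult_right)
    also have "\<dots> = F' j \<bullet> (transpose (Up N ?th j) ** (Wm S B N ?th ** transpose (Lo N ?th j)))"
      by (rule inner_mult_left)
    also have "transpose (Up N ?th j) ** (Wm S B N ?th ** transpose (Lo N ?th j)) = (- 1/2) *\<^sub>R V j"
      by (simp add: V_def vel_def matrix_mul_assoc)
    finally show "Wm S B N ?th \<bullet> (Up N ?th j ** F' j ** Lo N ?th j) = - (1 / (2 * real N)) * (norm (V j))^2"
      by (simp add: F'_def power2_norm_eq_inner)
  qed
  finally have eq: "(E t ** S) \<bullet> P' + (E t ** 0 + P' ** S) \<bullet> E t = - (1 / real N) * (\<Sum>n\<in>{1..N}. (norm (V n))^2)"
    by (simp add: sum_negf sum_divide_distrib[symmetric])
  show ?thesis unfolding lossE using dl unfolding eq V_def .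
qed

lemma pow_exp_upper:
  assumes "0 \<le> u" "1 \<le> N" "k \<le> N - 1"
  shows "(1 + u / real N) ^ k \<le> exp u"
proof -
  have "(1 + u / real N) ^ k \<le> exp (u / real N) ^ k"
    using assms by (intro power_mono) (auto simp: exp_ge_add_one_self)
  also have "\<dots> = exp (real k * (u / real N))" by (rule exp_of_nat_mult[symmetric])
  also have "\<dots> \<le> exp u"
  proof -
    have "real k \<le> real N" using assms by simp
    then have "real k * (u / real N) \<le> real N * (u / real N)"
      using assms by (intro mult_right_mono) auto
    then show ?thesis using assms by simp
  qed
  finally show ?thesis .
qed

lemma pow_exp_lower:
  assumes "0 \<le> u" "u \<le> 1/2" "1 \<le> N"
  shows "exp (- u) \<le> (1 - u / real N) ^ (N - 1)"
proof -
  define x where "x = u / real N"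
  have x0: "0 \<le> x" and x1: "x \<le> 1/2" using assms by (auto simp: x_def field_simps)
  have "1 / (1 - x) \<le> exp (x / (1 - x))"
  proof -
    have "1 + x / (1 - x) \<le> exp (x / (1 - x))" by (rule exp_ge_add_one_self)
    moreover have "1 + x / (1 - x) = 1 / (1 - x)" using x1 by (simp add: field_simps)
    ultimately show ?thesis by simp
  qed
  then have a: "exp (- (x / (1 - x))) \<le> 1 - x"
    using x1 by (simp add: exp_minus field_simps)
  have "exp (- u) \<le> exp (- (real (N - 1) * (x / (1 - x))))"
  proof -
    have "real (N - 1) * (x / (1 - x)) \<le> u"
    proof -
      have "real (N - 1) * (x / (1 - x)) = u * ((real N - 1) / (real N - u))"
        using assms x1 by (simp add: x_def of_nat_diff field_simps)
      also have "\<dots> \<le> u * 1"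
        using assms by (intro mult_left_mono) (auto simp: field_simps)
      finally show ?thesis by simp
    qed
    then show ?thesis by simp
  qed
  also have "\<dots> = exp (- (x / (1 - x))) ^ (N - 1)"
    by (simp add: exp_of_nat_mult[symmetric])
  also have "\<dots> \<le> (1 - x) ^ (N - 1)"
    by (intro power_mono a) simp
  finally show ?thesis by (simp add: x_def)
qed

lemma lowb_mono: "lowb A c \<Longrightarrow> c' \<le> c \<Longrightarrow> lowb A c'"
  unfolding lowb_def by (meson mult_right_mono norm_ge_zero order_trans)

context
  fixes N :: nat and th :: "nat \<Rightarrow> real^'d^'d" and u :: real
  assumes N: "1 \<le> N" and u0: "0 \<le> u" and bnd: "\<And>k. 1 \<le> k \<Longrightarrow> k \<le> N \<Longrightarrow> spec_norm (th k) \<le> u"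
begin

lemma fac_spec_u: "1 \<le> k \<Longrightarrow> k \<le> N \<Longrightarrow> spec_norm (fac N th k) \<le> 1 + u / real N"
  using fac_spec[of N th k] bnd[of k] N by (smt (verit) divide_right_mono of_nat_0_le_iff)

lemma Up_spec: "n \<le> N \<Longrightarrow> spec_norm (Up N th n) \<le> (1 + u / real N) ^ (N - n)"
  unfolding Up_def using u0 N by (intro rprod_spec fac_spec_u) auto

lemma Lo_spec: "1 \<le> n \<Longrightarrow> n \<le> N \<Longrightarrow> spec_norm (Lo N th n) \<le> (1 + u / real N) ^ (n - 1)"
  unfolding Lo_def using u0 N by (intro rprod_spec fac_spec_u) auto

lemma Pi_spec: "spec_norm (piprod N th N) \<le> exp u"
proof -
  have "spec_norm (piprod N th N) \<le> (1 + u / real N) ^ N"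
    unfolding piprod_rprod using u0 N by (intro rprod_spec fac_spec_u) auto
  also have "\<dots> \<le> exp (u / real N) ^ N"
    using u0 by (intro power_mono) (auto simp: exp_ge_add_one_self)
  also have "\<dots> = exp u" using N by (simp add: exp_of_nat_mult[symmetric])
  finally show ?thesis .
qed

lemma UL_spec:
  assumes "1 \<le> n" "n \<le> N"
  shows "spec_norm (Up N th n) * spec_norm (Lo N th n) \<le> exp u"
proof -
  have "spec_norm (Up N th n) * spec_norm (Lo N th n) \<le> (1 + u / real N) ^ (N - n) * (1 + u / real N) ^ (n - 1)"
    using assms u0 by (intro mult_mono Up_spec Lo_spec) (auto simp: spec_norm_nonneg)
  also have "\<dots> = (1 + u / real N) ^ (N - 1)"
    using assms by (simp add: power_add[symmetric])
  also have "\<dots> \<le> exp u" using u0 N by (intro pow_exp_upper) auto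
  finally show ?thesis .
qed

lemma UL_lowb:
  assumes "1 \<le> n" "n \<le> N" "u \<le> 1/2"
  shows "\<exists>a b. lowb (transpose (Up N th n)) a \<and> lowb (Lo N th n) b \<and> 0 \<le> a \<and> 0 \<le> b \<and> exp (- u) \<le> a * b"
proof -
  let ?c = "1 - u / real N"
  have c0: "0 \<le> ?c" using assms N by (simp add: field_simps)
  have fl: "lowb (fac N th k) ?c" if "1 \<le> k" "k \<le> N" for k
    by (rule lowb_mono[OF fac_lowb]) (use bnd[OF that] in \<open>simp add: divide_right_mono\<close>)
  have flt: "lowb (transpose (fac N th k)) ?c" if "1 \<le> k" "k \<le> N" for k
    by (rule lowb_mono[OF fac_lowb_t]) (use bnd[OF that] in \<open>simp add: divide_right_mono\<close>)
  have a: "lowb (transpose (Up N th n)) (?c ^ (N - n))"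
    unfolding Up_def using assms by (intro rprod_lowb_t flt c0) auto
  have b: "lowb (Lo N th n) (?c ^ (n - 1))"
    unfolding Lo_def using assms by (intro rprod_lowb fl c0) auto
  have "?c ^ (N - n) * ?c ^ (n - 1) = ?c ^ (N - 1)"
    using assms by (simp add: power_add[symmetric])
  also have "exp (- u) \<le> ?c ^ (N - 1)" using assms u0 N by (intro pow_exp_lower) auto
  finally show ?thesis using a b c0 by (intro exI[of _ "?c ^ (N - n)"] exI[of _ "?c ^ (n - 1)"]) auto
qed

lemma vel_upper:
  assumes "1 \<le> n" "n \<le> N"
  shows "spec_norm (vel S B N th n) \<le> 2 * exp u * norm (Wm S B N th)"
proof -
  let ?U = "Up N th n" and ?L = "Lo N th n" and ?W = "Wm S B N th"
  have "spec_norm (vel S B N th n) = 2 * spec_norm (transpose ?U ** ?W ** transpose ?L)"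
    by (simp add: vel_def spec_norm_scale spec_norm_minus)
  also have "spec_norm (transpose ?U ** ?W ** transpose ?L) \<le> spec_norm (transpose ?U) * spec_norm ?W * spec_norm (transpose ?L)"
    by (meson mult_right_mono order_trans spec_norm_mult spec_norm_nonneg)
  also have "\<dots> \<le> spec_norm ?U * norm ?W * spec_norm ?L"
    by (intro mult_mono spec_norm_transpose spec_le_norm) (auto simp: spec_norm_nonneg)
  also have "\<dots> = (spec_norm ?U * spec_norm ?L) * norm ?W" by simp
  also have "\<dots> \<le> exp u * norm ?W" using UL_spec[OF assms] by (intro mult_right_mono) auto
  finally show ?thesis by simp
qed

lemma vel_lower:
  assumes "1 \<le> n" "n \<le> N" "u \<le> 1/2"
  shows "2 * exp (- u) * norm (Wm S B N th) \<le> norm (vel S B N th n)"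
proof -
  let ?U = "Up N th n" and ?L = "Lo N th n" and ?W = "Wm S B N th"
  obtain a b where ab: "lowb (transpose ?U) a" "lowb ?L b" "0 \<le> a" "0 \<le> b" "exp (- u) \<le> a * b"
    using UL_lowb[OF assms] by blast
  have "b * norm ?W = b * norm (transpose ?W)" by (simp add: norm_transpose)
  also have "\<dots> \<le> norm (?L ** transpose ?W)"
    using ab by (intro norm_mult_left_low) (auto simp: lowb_def)
  also have "\<dots> = norm (?W ** transpose ?L)"
    by (metis matrix_transpose_mul norm_transpose transpose_transpose)
  finally have 1: "b * norm ?W \<le> norm (?W ** transpose ?L)" .
  have "a * norm (?W ** transpose ?L) \<le> norm (transpose ?U ** (?W ** transpose ?L))"
    using ab by (intro norm_mult_left_low) (auto simp: lowb_def)
  then have "a * (b * norm ?W) \<le> norm (transpose ?U ** ?W ** transpose ?L)"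
    using 1 ab by (smt (verit) matrix_mul_assoc mult_left_mono)
  moreover have "exp (- u) * norm ?W \<le> a * (b * norm ?W)"
    using ab by (simp add: mult_right_mono mult.assoc[symmetric])
  moreover have "norm (vel S B N th n) = 2 * norm (transpose ?U ** ?W ** transpose ?L)"
    by (simp add: vel_def)
  ultimately show ?thesis by linarith
qed

end

lemma mv_bl: "bounded_linear (\<lambda>A::real^'d^'d. A *v x)"
proof -
  have "linear (\<lambda>A::real^'d^'d. A *v x)"
    by (intro linearI) (simp_all add: matrix_vector_mult_def vec_eq_iff
        sum_distrib_left algebra_simps sum.distrib)
  then show ?thesis by (simp add: linear_conv_bounded_linear)
qed

lemma hvd_mv:
  fixes f :: "real \<Rightarrow> real^'d^'d"
  assumes "(f has_vector_derivative f') F"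
  shows "((\<lambda>s. f s *v x) has_vector_derivative (f' *v x)) F"
proof -
  have "((\<lambda>s. f s *v x) has_derivative (\<lambda>h. (h *\<^sub>R f') *v x)) F"
    using bounded_linear.has_derivative[OF mv_bl assms[unfolded has_vector_derivative_def]] .
  moreover have "(\<lambda>h. (h *\<^sub>R f') *v x) = (\<lambda>h. h *\<^sub>R (f' *v x))"
    using linear_scale[OF bounded_linear.linear[OF mv_bl]] by auto
  ultimately show ?thesis unfolding has_vector_derivative_def by simp
qed

lemma sqrt_exp: "sqrt (exp x) = exp (x / 2)"
proof -
  have "exp x = (exp (x/2))^2" by (simp add: power2_eq_square exp_add[symmetric])
  then show ?thesis by simp
qed

lemma spec_lip: "\<bar>spec_norm A - spec_norm B\<bar> \<le> norm (A - (B::real^'d^'d))"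
proof -
  have "spec_norm A \<le> spec_norm B + spec_norm (A - B)"
    using spec_norm_add[of B "A - B"] by simp
  moreover have "spec_norm B \<le> spec_norm A + spec_norm (B - A)"
    using spec_norm_add[of A "B - A"] by simp
  moreover have "spec_norm (A - B) \<le> norm (A - B)" by (rule spec_le_norm)
  moreover have "spec_norm (B - A) \<le> norm (A - B)" by (metis norm_minus_commute spec_le_norm)
  ultimately show ?thesis by linarith
qed

lemma spec_cont: "continuous_on UNIV (spec_norm :: real^'d^'d \<Rightarrow> real)"
  unfolding continuous_on_iff
proof (intro ballI allI impI)
  fix x :: "real^'d^'d" and e :: real assume "e > 0"
  then show "\<exists>d>0. \<forall>x'\<in>UNIV. dist x' x < d \<longrightarrow> dist (spec_norm x') (spec_norm x) < e"
    by (intro exI[of _ e]) (auto simp: dist_norm dist_real_def intro: le_less_trans[OF spec_lip])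
qed

locale traj =
  fixes S B :: "real^'d^'d" and m M :: real and N :: nat and Th :: "nat \<Rightarrow> real \<Rightarrow> real^'d^'d"
  assumes sym: "transpose S = S"
    and m_min: "\<forall>lam. is_eigenvalue S lam \<longrightarrow> m \<le> lam"
    and M_max: "\<forall>lam. is_eigenvalue S lam \<longrightarrow> lam \<le> M"
    and m_pos: "m > 0" and M_pos: "M > 0"
    and psd: "\<And>y. 0 \<le> y \<bullet> (S *v y)"
    and N: "1 \<le> N"
    and dv: "\<And>n t. 1 \<le> n \<Longrightarrow> n \<le> N \<Longrightarrow> 0 \<le> t \<Longrightarrow>
        ((\<lambda>s. Th n s) has_vector_derivative vel S B N (\<lambda>k. Th k t) n) (at t within {0..})"
begin

definition "ell s = loss S B N (\<lambda>k. Th k s)"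
definition "kap = 4 * exp (-1) * m"

lemma ell_deriv: "0 \<le> t \<Longrightarrow> (ell has_vector_derivative
     (- (1 / real N) * (\<Sum>n\<in>{1..N}. (norm (vel S B N (\<lambda>k. Th k t) n))^2))) (at t within {0..})"
  unfolding ell_def by (rule loss_deriv[OF sym N]) (rule dv, auto)

lemma W_ell: "(norm (Wm S B N (\<lambda>k. Th k s)))^2 \<le> M * ell s"
  "m * ell s \<le> (norm (Wm S B N (\<lambda>k. Th k s)))^2" "0 \<le> ell s"
  unfolding ell_def loss_def Wm_def Pi_prod_def
  by (rule loss_upper[OF sym M_max psd], rule loss_lower[OF sym m_min m_pos], rule loss_nonneg[OF sym psd])

lemma PL:
  assumes s: "0 \<le> s" and b: "\<And>n. 1 \<le> n \<Longrightarrow> n \<le> N \<Longrightarrow> spec_norm (Th n s) \<le> 1/2"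
  shows "- (1 / real N) * (\<Sum>n\<in>{1..N}. (norm (vel S B N (\<lambda>k. Th k s) n))^2) \<le> - kap * ell s"
proof -
  let ?W = "norm (Wm S B N (\<lambda>k. Th k s))"
  have each: "kap * ell s \<le> (norm (vel S B N (\<lambda>k. Th k s) n))^2" if "n \<in> {1..N}" for n
  proof -
    have "2 * exp (- (1/2)) * ?W \<le> norm (vel S B N (\<lambda>k. Th k s) n)"
      by (rule vel_lower[OF N, where u="1/2" and th="\<lambda>k. Th k s"]) (use b that in force)+
    then have "(2 * exp (- (1/2)) * ?W)^2 \<le> (norm (vel S B N (\<lambda>k. Th k s) n))^2"
      by (intro power_mono) auto
    moreover have "(2 * exp (- (1/2)) * ?W)^2 = 4 * exp (-1) * ?W^2"
      by (simp add: power_mult_distrib power2_eq_square exp_add[symmetric])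
    moreover have "kap * ell s \<le> 4 * exp (-1) * ?W^2"
      using W_ell(2)[of s] by (simp add: kap_def mult.assoc)
    ultimately show ?thesis by linarith
  qed
  have "real N * (kap * ell s) \<le> (\<Sum>n\<in>{1..N}. (norm (vel S B N (\<lambda>k. Th k s) n))^2)"
  proof -
    have "(\<Sum>n\<in>{1..N}. kap * ell s) \<le> (\<Sum>n\<in>{1..N}. (norm (vel S B N (\<lambda>k. Th k s) n))^2)"
      by (rule sum_mono[OF each])
    then show ?thesis by simp
  qed
  then have "kap * ell s \<le> (1 / real N) * (\<Sum>n\<in>{1..N}. (norm (vel S B N (\<lambda>k. Th k s) n))^2)"
    using N by (simp add: field_simps)
  then show ?thesis by simp
qed

lemma ell_decay:
  assumes T: "0 \<le> T" and b: "\<And>s n. 0 \<le> s \<Longrightarrow> s \<le> T \<Longrightarrow> 1 \<le> n \<Longrightarrow> n \<le> N \<Longrightarrow> spec_norm (Th n s) \<le> 1/2"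
    and s: "0 \<le> s" "s \<le> T"
  shows "ell s \<le> ell 0 * exp (- kap * s)"
proof -
  define ld where "ld t = - (1 / real N) * (\<Sum>n\<in>{1..N}. (norm (vel S B N (\<lambda>k. Th k t) n))^2)" for t
  have d: "((\<lambda>t. ell t * exp (kap * t)) has_vector_derivative (ld t * exp (kap * t) + ell t * (kap * exp (kap * t)))) (at t within {0..})"
    if "t \<in> {0..s}" for t
  proof -
    have "(ell has_real_derivative ld t) (at t within {0..})"
      using ell_deriv[of t] that by (simp add: ld_def has_real_derivative_iff_has_vector_derivative)
    moreover have "((\<lambda>t. exp (kap * t)) has_real_derivative (kap * exp (kap * t))) (at t within {0..})"
      by (auto intro!: derivative_eq_intros)
    ultimately have "((\<lambda>t. ell t * exp (kap * t)) has_real_derivative (ld t * exp (kap * t) + ell t * (kap * exp (kap * t)))) (at t within {0..})"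
      by (rule DERIV_mult'[THEN DERIV_cong]) (simp add: algebra_simps)
    then show ?thesis by (simp add: has_real_derivative_iff_has_vector_derivative)
  qed
  have "ell s * exp (kap * s) \<le> ell 0 * exp (kap * 0)"
  proof (rule mono_from_deriv[OF s(1) d])
    fix t assume t: "t \<in> {0..s}"
    have "ld t \<le> - kap * ell t" unfolding ld_def
      using t s by (intro PL) (use b in force)+
    then have "ld t + kap * ell t \<le> 0" by simp
    then have "(ld t + kap * ell t) * exp (kap * t) \<le> 0" by (simp add: mult_nonpos_nonneg)
    then show "ld t * exp (kap * t) + ell t * (kap * exp (kap * t)) \<le> 0" by (simp add: algebra_simps)
  qed auto
  then have "ell s * exp (kap * s) * exp (- kap * s) \<le> ell 0 * exp (- kap * s)" by simp
  then show ?thesis by (simp add: mult.assoc exp_add[symmetric])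
qed

lemma drift:
  assumes T: "0 \<le> T" and b: "\<And>s n. 0 \<le> s \<Longrightarrow> s \<le> T \<Longrightarrow> 1 \<le> n \<Longrightarrow> n \<le> N \<Longrightarrow> spec_norm (Th n s) \<le> 1/2"
    and n: "1 \<le> n" "n \<le> N"
  shows "spec_norm (Th n T - Th n 0) \<le> exp (3/2) * sqrt (M * ell 0) / m"
proof -
  define c0 where "c0 = 2 * exp (1/2) * sqrt (M * ell 0)"
  have kp: "kap > 0" using m_pos by (simp add: kap_def)
  have velb: "spec_norm (vel S B N (\<lambda>k. Th k s) n) \<le> c0 * exp (- kap * s / 2)" if s: "0 \<le> s" "s \<le> T" for s
  proof -
    let ?W = "norm (Wm S B N (\<lambda>k. Th k s))"
    have "spec_norm (vel S B N (\<lambda>k. Th k s) n) \<le> 2 * exp (1/2) * ?W"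
      by (rule vel_upper[OF N, where u="1/2" and th="\<lambda>k. Th k s"]) (use b s n in force)+
    also have "?W \<le> sqrt (M * ell s)"
      using W_ell(1)[of s] real_le_rsqrt by blast
    also have "\<dots> \<le> sqrt (M * (ell 0 * exp (- kap * s)))"
      using ell_decay[OF T b s] M_pos by (intro real_sqrt_le_mono mult_left_mono) auto
    also have "\<dots> = sqrt (M * ell 0) * exp (- kap * s / 2)"
      by (simp add: real_sqrt_mult sqrt_exp mult.assoc)
    finally show ?thesis by (simp add: c0_def mult.assoc)
  qed
  have "spec_norm (Th n T - Th n 0) \<le> 2 * c0 / kap"
  proof (rule spec_norm_le)
    fix x :: "real^'d"
    let ?f = "\<lambda>s. Th n s *v x"
    let ?g = "\<lambda>s. c0 * norm x * exp (- kap * s / 2)"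
    let ?G = "\<lambda>s. - (2 / kap) * c0 * norm x * exp (- kap * s / 2)"
    have "norm (?f T - ?f 0) \<le> ?G T - ?G 0"
    proof (rule drift_bound[OF T])
      fix s assume s: "s \<in> {0..T}"
      show "(?f has_vector_derivative (vel S B N (\<lambda>k. Th k s) n *v x)) (at s within {0..})"
        using s n by (intro hvd_mv dv) auto
      have "((\<lambda>s. - (2 / kap) * c0 * norm x * exp (- kap * s / 2)) has_real_derivative
              (- (2 / kap) * c0 * norm x * (exp (- kap * s / 2) * (- kap / 2)))) (at s within {0..})"
        by (auto intro!: derivative_eq_intros)
      moreover have "- (2 / kap) * c0 * norm x * (exp (- kap * s / 2) * (- kap / 2)) = ?g s"
        using kp by (simp add: field_simps)
      ultimately show "(?G has_vector_derivative ?g s) (at s within {0..})"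
        by (simp add: has_real_derivative_iff_has_vector_derivative)
      have "norm (vel S B N (\<lambda>k. Th k s) n *v x) \<le> spec_norm (vel S B N (\<lambda>k. Th k s) n) * norm x"
        by (rule spec_norm_apply)
      also have "\<dots> \<le> c0 * exp (- kap * s / 2) * norm x"
        using velb s by (intro mult_right_mono) auto
      finally show "norm (vel S B N (\<lambda>k. Th k s) n *v x) \<le> ?g s" by (simp add: mult_ac)
    qed
    also have "?G T - ?G 0 = (2 / kap) * c0 * norm x * (1 - exp (- kap * T / 2))"
      by (simp add: algebra_simps)
    also have "\<dots> \<le> (2 / kap) * c0 * norm x * 1"
      using kp W_ell(3)[of 0] M_pos by (intro mult_left_mono) (auto simp: c0_def)
    finally show "norm ((Th n T - Th n 0) *v x) \<le> 2 * c0 / kap * norm x"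
      by (simp add: matrix_vector_mult_diff_rdistrib)
  qed
  also have "2 * c0 / kap = exp (3/2) * sqrt (M * ell 0) / m"
  proof -
    have "exp (1/2) / exp (-1) = exp (3/2::real)" by (simp add: exp_diff[symmetric])
    then show ?thesis using m_pos by (simp add: c0_def kap_def field_simps)
  qed
  finally show ?thesis .
qed

lemma delta_small:
  assumes l0: "sqrt (ell 0) < m / (4 * sqrt (2 * M * exp 3))"
  shows "exp (3/2) * sqrt (M * ell 0) / m < 1/4"
proof -
  have e: "sqrt (2 * M * exp 3) = sqrt 2 * sqrt M * exp (3/2)"
    by (simp add: real_sqrt_mult sqrt_exp)
  have "m / (4 * sqrt (2 * M * exp 3)) \<le> m / (4 * (sqrt M * exp (3/2)))"
    unfolding e using m_pos M_pos by (intro divide_left_mono mult_left_mono) (auto simp: mult_ac)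
  with l0 have "sqrt (ell 0) < m / (4 * (sqrt M * exp (3/2)))" by linarith
  moreover have "0 < 4 * (sqrt M * exp (3/2))" using M_pos by simp
  ultimately have "sqrt (ell 0) * (4 * (sqrt M * exp (3/2))) < m"
    using pos_less_divide_eq by blast
  then show ?thesis using m_pos by (simp add: real_sqrt_mult field_simps)
qed

end

context traj
begin

lemma Th_cont: "1 \<le> n \<Longrightarrow> n \<le> N \<Longrightarrow> continuous_on {0..} (Th n)"
  unfolding continuous_on_eq_continuous_within
  using dv has_vector_derivative_continuous by (metis atLeast_iff)

lemma fn_cont: "1 \<le> n \<Longrightarrow> n \<le> N \<Longrightarrow> continuous_on {0..} (\<lambda>s. spec_norm (Th n s))"
  using continuous_on_compose2[OF spec_cont Th_cont] by auto

lemma boot: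
  assumes init: "\<And>n. 1 \<le> n \<Longrightarrow> n \<le> N \<Longrightarrow> spec_norm (Th n 0) \<le> 1/4"
    and l0: "sqrt (ell 0) < m / (4 * sqrt (2 * M * exp 3))"
    and s: "0 \<le> s" and n: "1 \<le> n" "n \<le> N"
  shows "spec_norm (Th n s) \<le> 1/2"
proof (rule ccontr)
  assume nb: "\<not> spec_norm (Th n s) \<le> 1/2"
  define A where "A = (\<Union>k\<in>{1..N}. {t \<in> {0..}. spec_norm (Th k t) \<in> {1/2..}})"
  have clk: "closed {t \<in> {0..}. spec_norm (Th k t) \<in> {1/2..}}" if "k \<in> {1..N}" for k
  proof -
    have "closed ({0..} \<inter> (\<lambda>t. spec_norm (Th k t)) -` {1/2..})"
      using continuous_closed_preimage[of "{0..}" "\<lambda>t. spec_norm (Th k t)" "{1/2..}"] fn_cont that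
      by auto
    moreover have "{0..} \<inter> (\<lambda>t. spec_norm (Th k t)) -` {1/2..} = {t \<in> {0..}. spec_norm (Th k t) \<in> {1/2..}}"
      by auto
    ultimately show ?thesis by simp
  qed
  have clA: "closed A" unfolding A_def
    by (intro closed_UN finite_atLeastAtMost ballI clk)
  have sA: "s \<in> A" unfolding A_def using nb s n by (intro UN_I[of n]) auto
  have bdd: "bdd_below A" unfolding A_def by (rule bdd_belowI[of _ 0]) auto
  define T where "T = Inf A"
  have TA: "T \<in> A" unfolding T_def using closed_contains_Inf[OF _ bdd clA] sA by blast
  have T0: "0 \<le> T" using TA by (auto simp: A_def)
  have below: "spec_norm (Th k t) < 1/2" if "0 \<le> t" "t < T" "1 \<le> k" "k \<le> N" for t k
  proof (rule ccontr)
    assume "\<not> spec_norm (Th k t) < 1/2"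
    then have "t \<in> A" unfolding A_def using that by (intro UN_I[of k]) auto
    then have "T \<le> t" unfolding T_def using bdd by (rule cInf_lower)
    then show False using that by simp
  qed
  have Tpos: "0 < T"
  proof (rule ccontr)
    assume "\<not> 0 < T"
    then have "T = 0" using T0 by simp
    then show False using TA init by (force simp: A_def)
  qed
  have atT: "spec_norm (Th k T) \<le> 1/2" if "1 \<le> k" "k \<le> N" for k
  proof -
    define C where "C = {t \<in> {0..T}. spec_norm (Th k t) \<in> {..1/2}}"
    have "closed C" unfolding C_def
      using continuous_closed_preimage[of "{0..T}" "\<lambda>t. spec_norm (Th k t)" "{..1/2}"]
        continuous_on_subset[OF fn_cont[OF that]]
      by (auto simp: vimage_def Int_def)
    moreover have "{0..<T} \<subseteq> C" unfolding C_def using below that by fastforce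
    ultimately have "closure {0..<T} \<subseteq> C" by (rule closure_minimal[rotated])
    then have "T \<in> C" using Tpos by auto
    then show ?thesis by (simp add: C_def)
  qed
  have b: "spec_norm (Th k t) \<le> 1/2" if "0 \<le> t" "t \<le> T" "1 \<le> k" "k \<le> N" for t k
    using below[of t k] atT[of k] that by (cases "t = T") auto
  have "spec_norm (Th k T) < 1/2" if "1 \<le> k" "k \<le> N" for k
  proof -
    have "spec_norm (Th k T) \<le> spec_norm (Th k 0) + spec_norm (Th k T - Th k 0)"
      using spec_norm_add[of "Th k 0" "Th k T - Th k 0"] by simp
    also have "\<dots> \<le> 1/4 + exp (3/2) * sqrt (M * ell 0) / m"
      by (intro add_mono init drift[OF T0 b]) (use that in auto)
    also have "\<dots> < 1/2" using delta_small[OF l0] by linarith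
    finally show ?thesis .
  qed
  then show False using TA by (force simp: A_def)
qed

end

lemma transpose_diff: "transpose ((A::real^'d^'d) - B) = transpose A - transpose B"
  by (simp add: transpose_def vec_eq_iff)

lemma spec_mult3: "spec_norm ((A::real^'d^'d) ** B ** C) \<le> spec_norm A * spec_norm B * spec_norm C"
  by (meson mult_right_mono order_trans spec_norm_mult spec_norm_nonneg)

lemma triple_diff:
  fixes A1 A2 W1 W2 C1 C2 :: "real^'d^'d"
  shows "spec_norm (A1 ** W1 ** C1 - A2 ** W2 ** C2) \<le>
     spec_norm (A1 - A2) * spec_norm W1 * spec_norm C1 + spec_norm A2 * spec_norm (W1 - W2) * spec_norm C1
     + spec_norm A2 * spec_norm W2 * spec_norm (C1 - C2)"
proof -
  have eq: "A1 ** W1 ** C1 - A2 ** W2 ** C2 = (A1 - A2) ** W1 ** C1 + A2 ** (W1 - W2) ** C1 + A2 ** W2 ** (C1 - C2)"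
    by (simp add: mat_diff_ldistrib mat_diff_rdistrib)
  show ?thesis unfolding eq
    by (rule order_trans[OF spec_norm_add add_mono[OF order_trans[OF spec_norm_add add_mono[OF spec_mult3 spec_mult3]] spec_mult3]])
qed

context
  fixes N :: nat and th :: "nat \<Rightarrow> real^'d^'d" and S B :: "real^'d^'d"
  assumes N: "1 \<le> N" and bnd: "\<And>k. 1 \<le> k \<Longrightarrow> k \<le> N \<Longrightarrow> spec_norm (th k) \<le> 1/2"
begin

lemma W_spec: "spec_norm (Wm S B N th) \<le> (exp (1/2) + spec_norm B) * spec_norm S"
proof -
  have "spec_norm (Wm S B N th) \<le> spec_norm (piprod N th N - B) * spec_norm S"
    unfolding Wm_def by (rule spec_norm_mult)
  also have "\<dots> \<le> (exp (1/2) + spec_norm B) * spec_norm S"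
    by (intro mult_right_mono order_trans[OF spec_norm_diff] add_mono Pi_spec[OF N] bnd)
       (auto simp: spec_norm_nonneg)
  finally show ?thesis .
qed

lemma vel_spec:
  assumes "1 \<le> n" "n \<le> N"
  shows "spec_norm (vel S B N th n) \<le> 2 * exp (1/2) * ((exp (1/2) + spec_norm B) * spec_norm S)"
proof -
  let ?U = "Up N th n" and ?L = "Lo N th n" and ?W = "Wm S B N th"
  have "spec_norm (vel S B N th n) = 2 * spec_norm (transpose ?U ** ?W ** transpose ?L)"
    by (simp add: vel_def spec_norm_scale spec_norm_minus)
  also have "spec_norm (transpose ?U ** ?W ** transpose ?L) \<le> spec_norm (transpose ?U) * spec_norm ?W * spec_norm (transpose ?L)"
    by (rule spec_mult3)
  also have "\<dots> \<le> spec_norm ?U * spec_norm ?W * spec_norm ?L"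
    by (intro mult_mono spec_norm_transpose) (auto simp: spec_norm_nonneg)
  also have "\<dots> = (spec_norm ?U * spec_norm ?L) * spec_norm ?W" by simp
  also have "\<dots> \<le> exp (1/2) * ((exp (1/2) + spec_norm B) * spec_norm S)"
    by (intro mult_mono UL_spec[OF N] W_spec bnd assms) (auto simp: spec_norm_nonneg)
  finally show ?thesis by simp
qed

lemma vel_smooth:
  assumes n: "1 \<le> n" "n + 1 \<le> N"
  shows "spec_norm (vel S B N th (n+1) - vel S B N th n) \<le>
     2 * exp 1 * ((exp (1/2) + spec_norm B) * spec_norm S) / real N"
proof -
  let ?F = "fac N th" and ?w = "(exp (1/2) + spec_norm B) * spec_norm S"
  have w0: "0 \<le> ?w" by (simp add: spec_norm_nonneg)
  have U: "Up N th n = Up N th (n+1) ** ?F (n+1)"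
  proof -
    have "Up N th n = rprod ?F n (1 + (N - n - 1))" unfolding Up_def using n by (simp add: Suc_diff_Suc)
    also have "\<dots> = rprod ?F (n+1) (N - n - 1) ** rprod ?F n 1" by (rule rprod_split)
    finally show ?thesis by (simp add: Up_def)
  qed
  have L: "Lo N th (Suc n) = ?F n ** Lo N th n"
    unfolding Lo_def using n by (cases n) auto
  have dU: "spec_norm (Up N th (n+1) - Up N th n) \<le> exp (1/2) * (1/2) / real N"
  proof -
    have "Up N th (n+1) - Up N th n = (- 1 / real N) *\<^sub>R (Up N th (n+1) ** th (n+1))"
      by (simp add: U fac_def matrix_add_ldistrib mat_scale_right)
    then have "spec_norm (Up N th (n+1) - Up N th n) = (1 / real N) * spec_norm (Up N th (n+1) ** th (n+1))"
      by (simp add: spec_norm_scale spec_norm_minus)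
    also have "\<dots> \<le> (1 / real N) * (spec_norm (Up N th (n+1)) * spec_norm (th (n+1)))"
      by (intro mult_left_mono spec_norm_mult) auto
    also have "\<dots> \<le> (1 / real N) * (exp (1/2) * (1/2))"
    proof -
      have "spec_norm (Up N th (n+1)) \<le> (1 + (1/2) / real N) ^ (N - (n+1))"
        using n by (intro Up_spec[OF N _ bnd]) auto
      also have "\<dots> \<le> exp (1/2)" using n N by (intro pow_exp_upper) auto
      finally show ?thesis using n
        by (intro mult_left_mono mult_mono bnd) (auto simp: spec_norm_nonneg)
    qed
    finally show ?thesis by simp
  qed
  have dL: "spec_norm (Lo N th (n+1) - Lo N th n) \<le> (1/2) * exp (1/2) / real N"
  proof -
    have "Lo N th (n+1) - Lo N th n = (1 / real N) *\<^sub>R (th n ** Lo N th n)"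
      by (simp add: L fac_def mat_add_rdistrib mat_scale_left)
    then have "spec_norm (Lo N th (n+1) - Lo N th n) = (1 / real N) * spec_norm (th n ** Lo N th n)"
      by (simp add: spec_norm_scale)
    also have "\<dots> \<le> (1 / real N) * (spec_norm (th n) * spec_norm (Lo N th n))"
      by (intro mult_left_mono spec_norm_mult) auto
    also have "\<dots> \<le> (1 / real N) * ((1/2) * exp (1/2))"
    proof -
      have "spec_norm (Lo N th n) \<le> (1 + (1/2) / real N) ^ (n - 1)"
        using n by (intro Lo_spec[OF N _ bnd]) auto
      also have "\<dots> \<le> exp (1/2)" using n N by (intro pow_exp_upper) auto
      finally show ?thesis using n
        by (intro mult_left_mono mult_mono bnd) (auto simp: spec_norm_nonneg)
    qed
    finally show ?thesis by simp
  qed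
  have sU: "spec_norm (Up N th k) \<le> exp (1/2)" if "1 \<le> k" "k \<le> N" for k
  proof -
    have "spec_norm (Up N th k) \<le> (1 + (1/2) / real N) ^ (N - k)"
      using that by (intro Up_spec[OF N _ bnd]) auto
    also have "\<dots> \<le> exp (1/2)" using that N by (intro pow_exp_upper) auto
    finally show ?thesis .
  qed
  have sL: "spec_norm (Lo N th k) \<le> exp (1/2)" if "1 \<le> k" "k \<le> N" for k
  proof -
    have "spec_norm (Lo N th k) \<le> (1 + (1/2) / real N) ^ (k - 1)"
      using that by (intro Lo_spec[OF N _ bnd]) auto
    also have "\<dots> \<le> exp (1/2)" using that N by (intro pow_exp_upper) auto
    finally show ?thesis .
  qed
  let ?U1 = "transpose (Up N th (n+1))" and ?U2 = "transpose (Up N th n)"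
  let ?L1 = "transpose (Lo N th (n+1))" and ?L2 = "transpose (Lo N th n)" and ?W = "Wm S B N th"
  have "vel S B N th (n+1) - vel S B N th n = (-2) *\<^sub>R (?U1 ** ?W ** ?L1 - ?U2 ** ?W ** ?L2)"
    by (simp add: vel_def scaleR_diff_right)
  then have "spec_norm (vel S B N th (n+1) - vel S B N th n) = 2 * spec_norm (?U1 ** ?W ** ?L1 - ?U2 ** ?W ** ?L2)"
    by (simp add: spec_norm_scale spec_norm_minus)
  also have "spec_norm (?U1 ** ?W ** ?L1 - ?U2 ** ?W ** ?L2) \<le>
     spec_norm (?U1 - ?U2) * spec_norm ?W * spec_norm ?L1 + spec_norm ?U2 * spec_norm (?W - ?W) * spec_norm ?L1
     + spec_norm ?U2 * spec_norm ?W * spec_norm (?L1 - ?L2)" by (rule triple_diff)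
  also have "\<dots> \<le> (exp (1/2) * (1/2) / real N) * ?w * exp (1/2) + 0
     + exp (1/2) * ?w * ((1/2) * exp (1/2) / real N)"
  proof (intro add_mono mult_mono)
    show "spec_norm (?U1 - ?U2) \<le> exp (1/2) * (1/2) / real N"
      using dU spec_norm_transpose[of "Up N th (n+1) - Up N th n"] by (simp add: transpose_diff)
    show "spec_norm (?L1 - ?L2) \<le> (1/2) * exp (1/2) / real N"
      using dL spec_norm_transpose[of "Lo N th (n+1) - Lo N th n"] by (simp add: transpose_diff)
    show "spec_norm ?U2 \<le> exp (1/2)" using n spec_norm_transpose order_trans sU by (metis add_leD1)
    show "spec_norm ?L1 \<le> exp (1/2)" using n spec_norm_transpose order_trans sL
      by (metis le_add2)
    show "spec_norm ?W \<le> ?w" by (rule W_spec)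
  qed (auto simp: spec_norm_nonneg w0 W_spec)
  also have "\<dots> = exp 1 * ?w / real N"
    by (simp add: field_simps exp_add[symmetric])
  finally show ?thesis by simp
qed

end

lemma pow_exp_upper2:
  assumes "0 \<le> u" "1 \<le> N" "k \<le> N"
  shows "(1 + u / real N) ^ k \<le> exp u"
proof -
  have "(1 + u / real N) ^ k \<le> exp (u / real N) ^ k"
    using assms by (intro power_mono) (auto simp: exp_ge_add_one_self)
  also have "\<dots> = exp (real k * (u / real N))" by (rule exp_of_nat_mult[symmetric])
  also have "\<dots> \<le> exp u"
  proof -
    have "real k \<le> real N" using assms by simp
    then have "real k * (u / real N) \<le> real N * (u / real N)"
      using assms by (intro mult_right_mono) auto
    then show ?thesis using assms by simp
  qed
  finally show ?thesis .
qed

lemma Up_half: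
  assumes N: "1 \<le> N" and bnd: "\<And>k. 1 \<le> k \<Longrightarrow> k \<le> N \<Longrightarrow> spec_norm (th k) \<le> 1/2" and "n \<le> N"
  shows "spec_norm (Up N th n) \<le> exp (1/2)"
proof -
  have "spec_norm (Up N th n) \<le> (1 + (1/2) / real N) ^ (N - n)"
    using assms by (intro Up_spec[OF N _ bnd]) auto
  also have "\<dots> \<le> exp (1/2)" using assms by (intro pow_exp_upper2) auto
  finally show ?thesis .
qed

lemma Lo_half:
  assumes N: "1 \<le> N" and bnd: "\<And>k. 1 \<le> k \<Longrightarrow> k \<le> N \<Longrightarrow> spec_norm (th k) \<le> 1/2" and "1 \<le> n" "n \<le> N"
  shows "spec_norm (Lo N th n) \<le> exp (1/2)"
proof -
  have "spec_norm (Lo N th n) \<le> (1 + (1/2) / real N) ^ (n - 1)"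
    using assms by (intro Lo_spec[OF N _ bnd]) auto
  also have "\<dots> \<le> exp (1/2)" using assms by (intro pow_exp_upper2) auto
  finally show ?thesis .
qed

locale cmp =
  fixes N :: nat and th1 th2 :: "nat \<Rightarrow> real^'d^'d" and S B :: "real^'d^'d" and sg :: real
  assumes N: "1 \<le> N"
    and bnd1: "\<And>k. 1 \<le> k \<Longrightarrow> k \<le> N \<Longrightarrow> spec_norm (th1 k) \<le> 1/2"
    and bnd2: "\<And>k. 1 \<le> k \<Longrightarrow> k \<le> 2*N \<Longrightarrow> spec_norm (th2 k) \<le> 1/2"
    and sm: "\<And>j. 1 \<le> j \<Longrightarrow> j + 1 \<le> 2*N \<Longrightarrow> spec_norm (th2 (j+1) - th2 j) \<le> sg / real (2*N)"
    and sg0: "0 \<le> sg"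
begin

definition "Dd = (\<Sum>k\<in>{1..N}. spec_norm (th1 k - th2 (2*k))) / real N"
definition "Fa = fac N th1"
definition "Fb = fac (2*N) th2"
definition "Yp = (\<lambda>j. Fb (2*j) ** Fb (2*j - 1))"

lemma N2: "1 \<le> 2*N" using N by simp

lemma sFa: "1 \<le> k \<Longrightarrow> k \<le> N \<Longrightarrow> spec_norm (Fa k) \<le> 1 + 1 / real N"
proof -
  assume k: "1 \<le> k" "k \<le> N"
  have "spec_norm (Fa k) \<le> 1 + (1/2) / real N"
    unfolding Fa_def by (rule fac_spec_u[OF N _ bnd1]) (use k in auto)
  also have "\<dots> \<le> 1 + 1 / real N" using N by (simp add: field_simps)
  finally show ?thesis .
qed

lemma sFb: "1 \<le> j \<Longrightarrow> j \<le> 2*N \<Longrightarrow> spec_norm (Fb j) \<le> 1 + 1 / (4 * real N)"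
proof -
  assume j: "1 \<le> j" "j \<le> 2*N"
  have "spec_norm (Fb j) \<le> 1 + (1/2) / real (2*N)"
    unfolding Fb_def by (rule fac_spec_u[OF N2 _ bnd2]) (use j in auto)
  then show ?thesis by simp
qed

lemma sY: "1 \<le> k \<Longrightarrow> k \<le> N \<Longrightarrow> spec_norm (Yp k) \<le> 1 + 1 / real N"
proof -
  assume k: "1 \<le> k" "k \<le> N"
  have "spec_norm (Yp k) \<le> spec_norm (Fb (2*k)) * spec_norm (Fb (2*k - 1))"
    unfolding Yp_def by (rule spec_norm_mult)
  also have "\<dots> \<le> (1 + 1 / (4 * real N)) * (1 + 1 / (4 * real N))"
    using k by (intro mult_mono sFb) (auto simp: spec_norm_nonneg)
  also have "\<dots> \<le> 1 + 1 / real N"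
    using N by (simp add: field_simps)
  finally show ?thesis .
qed

lemma dFY:
  assumes k: "1 \<le> k" "k \<le> N"
  shows "spec_norm (Fa k - Yp k) \<le> spec_norm (th1 k - th2 (2*k)) / real N + (sg + 1) / (real N)^2"
proof -
  let ?a = "th2 (2*k)" and ?b = "th2 (2*k - 1)"
  have eq: "Fa k - Yp k = (1 / real N) *\<^sub>R (th1 k - ?a) + (1 / (2 * real N)) *\<^sub>R (?a - ?b)
      - (1 / (4 * (real N)^2)) *\<^sub>R (?a ** ?b)"
  proof -
    have "Yp k = mat 1 + (1 / (2 * real N)) *\<^sub>R ?b + (1 / (2 * real N)) *\<^sub>R ?a + (1 / (4 * (real N)^2)) *\<^sub>R (?a ** ?b)"
      by (simp add: Yp_def Fb_def fac_def matrix_add_ldistrib mat_add_rdistrib mat_scale_left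
        mat_scale_right power2_eq_square add.assoc scaleR_add_right)
    then show ?thesis
      by (simp add: Fa_def fac_def vec_eq_iff field_simps)
  qed
  have sab: "spec_norm (?a - ?b) \<le> sg / real (2*N)"
    using sm[of "2*k - 1"] k by simp
  have sa: "spec_norm ?a \<le> 1/2" using k by (intro bnd2) auto
  have sb: "spec_norm ?b \<le> 1/2" using k by (intro bnd2) auto
  have "spec_norm (Fa k - Yp k) \<le> (1 / real N) * spec_norm (th1 k - ?a) + (1 / (2 * real N)) * spec_norm (?a - ?b)
      + (1 / (4 * (real N)^2)) * spec_norm (?a ** ?b)"
    unfolding eq
    by (rule order_trans[OF spec_norm_diff add_mono[OF order_trans[OF spec_norm_add add_mono]]])
       (simp_all add: spec_norm_scale)
  also have "\<dots> \<le> (1 / real N) * spec_norm (th1 k - ?a) + (1 / (2 * real N)) * (sg / real (2*N))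
      + (1 / (4 * (real N)^2)) * (1/2 * (1/2))"
    using sab sa sb by (intro add_mono mult_left_mono order_trans[OF spec_norm_mult] mult_mono)
      (auto simp: spec_norm_nonneg)
  also have "\<dots> \<le> spec_norm (th1 k - th2 (2*k)) / real N + (sg + 1) / (real N)^2"
    using N sg0 by (simp add: field_simps power2_eq_square)
  finally show ?thesis .
qed

lemma sumFY:
  assumes "a0 + l \<le> N"
  shows "(\<Sum>k\<in>{a0<..a0+l}. spec_norm (Fa k - Yp k)) \<le> Dd + (sg + 1) / real N"
proof -
  have "(\<Sum>k\<in>{a0<..a0+l}. spec_norm (Fa k - Yp k)) \<le> (\<Sum>k\<in>{1..N}. spec_norm (Fa k - Yp k))"
    using assms by (intro sum_mono2) (auto simp: spec_norm_nonneg)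
  also have "\<dots> \<le> (\<Sum>k\<in>{1..N}. spec_norm (th1 k - th2 (2*k)) / real N + (sg + 1) / (real N)^2)"
    by (intro sum_mono dFY) auto
  also have "\<dots> = Dd + (sg + 1) / real N"
    using N by (simp add: Dd_def sum.distrib sum_divide_distrib power2_eq_square)
  finally show ?thesis .
qed

lemma tele:
  assumes "a0 + l \<le> N"
  shows "spec_norm (rprod Fa a0 l - rprod Yp a0 l) \<le> exp 1 * (Dd + (sg + 1) / real N)"
proof -
  have "spec_norm (rprod Fa a0 l - rprod Yp a0 l) \<le> (1 + 1 / real N) ^ l * (\<Sum>k\<in>{a0<..a0+l}. spec_norm (Fa k - Yp k))"
    using assms by (intro rprod_tele) (auto intro: sFa sY)
  also have "\<dots> \<le> exp 1 * (Dd + (sg + 1) / real N)"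
    using assms N by (intro mult_mono sumFY pow_exp_upper2[where u=1, simplified]) (auto intro!: sum_nonneg simp: spec_norm_nonneg)
  finally show ?thesis .
qed

end

context cmp
begin

definition "Dl = exp 1 * (Dd + (sg + 2) / real N)"

lemma Dd0: "0 \<le> Dd" unfolding Dd_def by (intro divide_nonneg_nonneg sum_nonneg) (auto simp: spec_norm_nonneg)

lemma dPi: "spec_norm (piprod N th1 N - piprod (2*N) th2 (2*N)) \<le> Dl"
proof -
  have "piprod (2*N) th2 (2*N) = rprod Yp 0 N"
    unfolding piprod_rprod Yp_def Fb_def using rprod_pair[of "fac (2*N) th2" 0 N] by simp
  then have "spec_norm (piprod N th1 N - piprod (2*N) th2 (2*N)) = spec_norm (rprod Fa 0 N - rprod Yp 0 N)"
    by (simp add: piprod_rprod Fa_def)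
  also have "\<dots> \<le> exp 1 * (Dd + (sg + 1) / real N)" by (rule tele) simp
  also have "\<dots> \<le> Dl" unfolding Dl_def using N by (intro mult_left_mono add_left_mono divide_right_mono) auto
  finally show ?thesis .
qed

lemma dU:
  assumes n: "1 \<le> n" "n \<le> N"
  shows "spec_norm (Up N th1 n - Up (2*N) th2 (2*n)) \<le> Dl"
proof -
  have "Up (2*N) th2 (2*n) = rprod Yp n (N - n)"
  proof -
    have "Up (2*N) th2 (2*n) = rprod (fac (2*N) th2) (2*n) (2*(N - n))"
      unfolding Up_def by (simp add: diff_mult_distrib2)
    then show ?thesis using rprod_pair[of "fac (2*N) th2" n "N - n"] by (simp add: Yp_def Fb_def)
  qed
  then have "spec_norm (Up N th1 n - Up (2*N) th2 (2*n)) = spec_norm (rprod Fa n (N - n) - rprod Yp n (N - n))"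
    by (simp add: Up_def Fa_def)
  also have "\<dots> \<le> exp 1 * (Dd + (sg + 1) / real N)" by (rule tele) (use n in simp)
  also have "\<dots> \<le> Dl" unfolding Dl_def using N by (intro mult_left_mono add_left_mono divide_right_mono) auto
  finally show ?thesis .
qed

lemma dL:
  assumes n: "1 \<le> n" "n \<le> N"
  shows "spec_norm (Lo N th1 n - Lo (2*N) th2 (2*n)) \<le> Dl"
proof -
  let ?RY = "rprod Yp 0 (n - 1)" and ?RA = "rprod Fa 0 (n - 1)"
  have L2: "Lo (2*N) th2 (2*n) = Fb (2*n - 1) ** ?RY"
  proof -
    have "2*n - 1 = Suc (2*(n-1))" using n by simp
    then have "Lo (2*N) th2 (2*n) = Fb (2*n - 1) ** rprod Fb 0 (2*(n-1))"
      unfolding Lo_def Fb_def using n by simp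
    also have "rprod Fb 0 (2*(n-1)) = ?RY" using rprod_pair[of Fb 0 "n - 1"] by (simp add: Yp_def)
    finally show ?thesis .
  qed
  have eq: "Lo N th1 n - Lo (2*N) th2 (2*n) = (?RA - ?RY) + (-(1 / real (2*N))) *\<^sub>R (th2 (2*n - 1) ** ?RY)"
    unfolding L2 by (simp add: Lo_def Fa_def Fb_def fac_def mat_add_rdistrib mat_scale_left)
  have sRY: "spec_norm ?RY \<le> exp 1"
  proof -
    have "spec_norm ?RY \<le> (1 + 1 / real N) ^ (n - 1)" using n by (intro rprod_spec) (auto intro: sY)
    also have "\<dots> \<le> exp 1" using n N pow_exp_upper2[of 1 N "n - 1"] by simp
    finally show ?thesis .
  qed
  have "spec_norm (Lo N th1 n - Lo (2*N) th2 (2*n)) \<le> spec_norm (?RA - ?RY) + (1 / real (2*N)) * spec_norm (th2 (2*n - 1) ** ?RY)"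
    unfolding eq by (rule order_trans[OF spec_norm_add]) (simp add: spec_norm_scale spec_norm_minus)
  also have "\<dots> \<le> exp 1 * (Dd + (sg + 1) / real N) + (1 / real (2*N)) * ((1/2) * exp 1)"
  proof (intro add_mono mult_left_mono)
    show "spec_norm (?RA - ?RY) \<le> exp 1 * (Dd + (sg + 1) / real N)" by (rule tele) (use n in simp)
    show "spec_norm (th2 (2*n - 1) ** ?RY) \<le> (1/2) * exp 1"
      using n by (intro order_trans[OF spec_norm_mult] mult_mono bnd2 sRY) (auto simp: spec_norm_nonneg)
  qed simp
  also have "\<dots> \<le> Dl" unfolding Dl_def using N by (simp add: field_simps)
  finally show ?thesis .
qed

definition "wS = (exp (1/2) + spec_norm B) * spec_norm S"

lemma vel_compare:
  assumes n: "1 \<le> n" "n \<le> N"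
  shows "spec_norm (vel S B N th1 n - vel S B (2*N) th2 (2*n)) \<le> 2 * (2 * exp (1/2) * wS + exp 1 * spec_norm S) * Dl"
proof -
  let ?U1 = "transpose (Up N th1 n)" and ?U2 = "transpose (Up (2*N) th2 (2*n))"
  let ?L1 = "transpose (Lo N th1 n)" and ?L2 = "transpose (Lo (2*N) th2 (2*n))"
  let ?W1 = "Wm S B N th1" and ?W2 = "Wm S B (2*N) th2"
  have Dl0: "0 \<le> Dl" unfolding Dl_def using Dd0 sg0 by simp
  have sU2: "spec_norm ?U2 \<le> exp (1/2)"
    using n by (intro order_trans[OF spec_norm_transpose] Up_half[OF N2 bnd2]) auto
  have sL1: "spec_norm ?L1 \<le> exp (1/2)"
    using n by (intro order_trans[OF spec_norm_transpose] Lo_half[OF N bnd1]) auto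
  have "vel S B N th1 n - vel S B (2*N) th2 (2*n) = (-2) *\<^sub>R (?U1 ** ?W1 ** ?L1 - ?U2 ** ?W2 ** ?L2)"
    by (simp add: vel_def scaleR_diff_right)
  then have "spec_norm (vel S B N th1 n - vel S B (2*N) th2 (2*n)) = 2 * spec_norm (?U1 ** ?W1 ** ?L1 - ?U2 ** ?W2 ** ?L2)"
    by (simp add: spec_norm_scale spec_norm_minus)
  also have "spec_norm (?U1 ** ?W1 ** ?L1 - ?U2 ** ?W2 ** ?L2) \<le>
     spec_norm (?U1 - ?U2) * spec_norm ?W1 * spec_norm ?L1 + spec_norm ?U2 * spec_norm (?W1 - ?W2) * spec_norm ?L1
     + spec_norm ?U2 * spec_norm ?W2 * spec_norm (?L1 - ?L2)" by (rule triple_diff)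
  also have "\<dots> \<le> Dl * wS * exp (1/2) + exp (1/2) * (Dl * spec_norm S) * exp (1/2) + exp (1/2) * wS * Dl"
  proof (intro add_mono mult_mono)
    show "spec_norm (?U1 - ?U2) \<le> Dl"
      using dU[OF n] spec_norm_transpose[of "Up N th1 n - Up (2*N) th2 (2*n)"] by (simp add: transpose_diff)
    show "spec_norm (?L1 - ?L2) \<le> Dl"
      using dL[OF n] spec_norm_transpose[of "Lo N th1 n - Lo (2*N) th2 (2*n)"] by (simp add: transpose_diff)
    show "spec_norm ?U2 \<le> exp (1/2)"
      using n by (intro order_trans[OF spec_norm_transpose] Up_half[OF N2 bnd2]) auto
    show "spec_norm ?L1 \<le> exp (1/2)"
      using n by (intro order_trans[OF spec_norm_transpose] Lo_half[OF N bnd1]) auto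
    show "spec_norm ?W1 \<le> wS" unfolding wS_def by (rule W_spec[OF N bnd1])
    show "spec_norm ?W2 \<le> wS" unfolding wS_def by (rule W_spec[OF N2 bnd2])
    show "spec_norm (?W1 - ?W2) \<le> Dl * spec_norm S"
      unfolding Wm_def using dPi
      by (simp add: mat_diff_rdistrib[symmetric] order_trans[OF spec_norm_mult] mult_right_mono spec_norm_nonneg)
  qed (auto simp: spec_norm_nonneg Dl0 wS_def sU2 sL1)
  also have "\<dots> = (2 * exp (1/2) * wS + exp 1 * spec_norm S) * Dl"
    by (simp add: algebra_simps exp_add[symmetric])
  finally show ?thesis by (simp add: algebra_simps)
qed

end

lemma sum_sq_cs:
  fixes f :: "nat \<Rightarrow> real"
  assumes "finite A"
  shows "(sum f A)^2 \<le> real (card A) * (\<Sum>k\<in>A. (f k)^2)"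
proof (cases "card A = 0")
  case True then show ?thesis using assms by simp
next
  case False
  define c where "c = real (card A)"
  have c0: "c > 0" using False by (simp add: c_def)
  define a where "a = sum f A / c"
  have "0 \<le> (\<Sum>k\<in>A. (f k - a)^2)" by (intro sum_nonneg) auto
  also have "\<dots> = (\<Sum>k\<in>A. (f k)^2) - 2 * a * sum f A + c * a^2"
  proof -
    have e: "(f k - a)^2 = (f k)^2 - (2 * a) * f k + a^2" for k by (simp add: power2_diff mult_ac)
    have "(\<Sum>k\<in>A. (f k - a)^2) = (\<Sum>k\<in>A. (f k)^2) - (\<Sum>k\<in>A. (2 * a) * f k) + (\<Sum>k\<in>A. a^2)"
      unfolding e by (simp add: sum.distrib sum_subtractf)
    also have "(\<Sum>k\<in>A. (2 * a) * f k) = 2 * a * sum f A" by (rule sum_distrib_left[symmetric])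
    finally show ?thesis by (simp add: c_def)
  qed
  also have "\<dots> = (\<Sum>k\<in>A. (f k)^2) - (sum f A)^2 / c"
    using c0 by (simp add: a_def field_simps power2_eq_square)
  finally have "(sum f A)^2 / c \<le> (\<Sum>k\<in>A. (f k)^2)" by simp
  then show ?thesis using c0 by (simp add: c_def field_simps)
qed

lemma spec_drift_const:
  fixes F F' :: "real \<Rightarrow> real^'d^'d"
  assumes "0 \<le> t"
    and "\<And>s. s \<in> {0..t} \<Longrightarrow> (F has_vector_derivative F' s) (at s within {0..})"
    and "\<And>s. s \<in> {0..t} \<Longrightarrow> spec_norm (F' s) \<le> K"
  shows "spec_norm (F t - F 0) \<le> K * t"
proof (rule spec_norm_le)
  fix x
  have "norm ((\<lambda>s. F s *v x) t - (\<lambda>s. F s *v x) 0) \<le> (K * norm x) * t"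
  proof (rule const_drift_bound[OF assms(1)])
    fix s assume s: "s \<in> {0..t}"
    show "((\<lambda>s. F s *v x) has_vector_derivative F' s *v x) (at s within {0..})"
      using assms(2)[OF s] by (rule hvd_mv)
    show "norm (F' s *v x) \<le> K * norm x"
      using spec_norm_apply[of "F' s" x] assms(3)[OF s]
      by (meson mult_right_mono norm_ge_zero order_trans)
  qed
  then show "norm ((F t - F 0) *v x) \<le> K * t * norm x"
    by (simp add: matrix_vector_mult_diff_rdistrib mult_ac)
qed

lemma vel_compare_clean:
  fixes th1 th2 :: "nat \<Rightarrow> real^'d^'d" and S B :: "real^'d^'d"
  assumes N: "1 \<le> N"
    and bnd1: "\<And>k. 1 \<le> k \<Longrightarrow> k \<le> N \<Longrightarrow> spec_norm (th1 k) \<le> 1/2"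
    and bnd2: "\<And>k. 1 \<le> k \<Longrightarrow> k \<le> 2*N \<Longrightarrow> spec_norm (th2 k) \<le> 1/2"
    and sm: "\<And>j. 1 \<le> j \<Longrightarrow> j + 1 \<le> 2*N \<Longrightarrow> spec_norm (th2 (j+1) - th2 j) \<le> sg / real (2*N)"
    and sg0: "0 \<le> sg" and n: "1 \<le> n" "n \<le> N"
  shows "spec_norm (vel S B N th1 n - vel S B (2*N) th2 (2*n)) \<le>
    2 * (2 * exp (1/2) * ((exp (1/2) + spec_norm B) * spec_norm S) + exp 1 * spec_norm S) *
    (exp 1 * ((\<Sum>k\<in>{1..N}. spec_norm (th1 k - th2 (2*k))) / real N + (sg + 2) / real N))"
proof -
  interpret cmp N th1 th2 S B sg
    using N bnd1 bnd2 sm sg0 by unfold_locales auto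
  show ?thesis using vel_compare[OF n] unfolding Dl_def Dd_def wS_def .
qed

lemma part2:
  fixes S B :: "real^'d^'d" and th :: "nat \<Rightarrow> nat \<Rightarrow> real \<Rightarrow> real^'d^'d"
  assumes dvel: "\<And>N n t. 1 \<le> N \<Longrightarrow> 1 \<le> n \<Longrightarrow> n \<le> N \<Longrightarrow> 0 \<le> t \<Longrightarrow>
        ((\<lambda>s. th N n s) has_vector_derivative vel S B N (\<lambda>k. th N k t) n) (at t within {0..})"
    and bnd: "\<And>N n s. 1 \<le> N \<Longrightarrow> 1 \<le> n \<Longrightarrow> n \<le> N \<Longrightarrow> 0 \<le> s \<Longrightarrow> spec_norm (th N n s) \<le> 1/2"
    and C0: "0 < C0"
    and sm0: "\<And>N n. 1 \<le> N \<Longrightarrow> 1 \<le> n \<Longrightarrow> n + 1 \<le> N \<Longrightarrow> spec_norm (th N (n+1) 0 - th N n 0) \<le> C0 / real N"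
    and sc0: "\<And>N n. N0 \<le> N \<Longrightarrow> 1 \<le> n \<Longrightarrow> n \<le> N \<Longrightarrow> spec_norm (th N n 0 - th (2*N) (2*n) 0) \<le> C / real N"
    and t: "0 \<le> t"
  shows "\<exists>C'. \<forall>N \<ge> max N0 1. \<forall>n\<in>{1..N}. spec_norm (th N n t - th (2*N) (2*n) t) \<le> C' / real N"
proof -
  define w where "w = (exp (1/2) + spec_norm B) * spec_norm S"
  have w0: "0 \<le> w" unfolding w_def by (simp add: spec_norm_nonneg)
  define K1 where "K1 = 2 * exp 1 * w"
  have K10: "0 \<le> K1" unfolding K1_def using w0 by simp
  have smooth: "spec_norm (th N (n+1) s - th N n s) \<le> (C0 + K1 * s) / real N"
    if N: "1 \<le> N" and n: "1 \<le> n" "n + 1 \<le> N" and s: "0 \<le> s" for N n s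
  proof -
    have "spec_norm ((\<lambda>s. th N (n+1) s - th N n s) s - (\<lambda>s. th N (n+1) s - th N n s) 0) \<le> (K1 / real N) * s"
    proof (rule spec_drift_const[OF s])
      fix r assume r: "r \<in> {0..s}"
      show "((\<lambda>s. th N (n+1) s - th N n s) has_vector_derivative
             (vel S B N (\<lambda>k. th N k r) (n+1) - vel S B N (\<lambda>k. th N k r) n)) (at r within {0..})"
        using r n N by (intro has_vector_derivative_diff dvel) auto
      show "spec_norm (vel S B N (\<lambda>k. th N k r) (n+1) - vel S B N (\<lambda>k. th N k r) n) \<le> K1 / real N"
        unfolding K1_def w_def
        by (rule vel_smooth[OF N _ n]) (use r bnd N in auto)
    qed
    then have "spec_norm (th N (n+1) s - th N n s - (th N (n+1) 0 - th N n 0)) \<le> K1 * s / real N" by simp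
    moreover have "spec_norm (th N (n+1) s - th N n s) \<le> spec_norm (th N (n+1) 0 - th N n 0)
        + spec_norm (th N (n+1) s - th N n s - (th N (n+1) 0 - th N n 0))"
      using spec_norm_add[of "th N (n+1) 0 - th N n 0" "th N (n+1) s - th N n s - (th N (n+1) 0 - th N n 0)"]
      by simp
    ultimately show ?thesis using sm0[OF N n] by (simp add: add_divide_distrib)
  qed
  define sg where "sg = C0 + K1 * t"
  have sg0: "0 \<le> sg" unfolding sg_def using C0 K10 t by simp
  define K2 where "K2 = 2 * (2 * exp (1/2) * w + exp 1 * spec_norm S)"
  have K20: "0 \<le> K2" unfolding K2_def using w0 by (simp add: spec_norm_nonneg)
  define dd where "dd = real CARD('d)"
  have dd0: "0 \<le> dd" unfolding dd_def by simp
  define K3 where "K3 = sqrt dd * K2 * exp 1"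
  have K30: "0 \<le> K3" unfolding K3_def using K20 by (simp add: dd_def)
  define rho where "rho = sg + 2"
  define al where "al = 3 * K3 + 1"
  have al0: "0 < al" unfolding al_def using K30 by simp
  define K4 where "K4 = exp (al * t) * (dd * C^2 + K3 * rho^2 / al)"
  define C' where "C' = C + t * K2 * exp 1 * (sqrt K4 + rho)"
  show ?thesis
  proof (intro exI[of _ C'] allI impI ballI)
    fix N n assume NN: "max N0 1 \<le> N" and n: "n \<in> {1..N}"
    have N: "1 \<le> N" and N0: "N0 \<le> N" using NN by auto
    have Np: "real N > 0" using N by simp
    define D where "D k s = th N k s - th (2*N) (2*k) s" for k s
    define D' where "D' k s = vel S B N (\<lambda>j. th N j s) k - vel S B (2*N) (\<lambda>j. th (2*N) j s) (2*k)" for k s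
    have dD: "((\<lambda>s. D k s) has_vector_derivative D' k s) (at s within {0..})"
      if "1 \<le> k" "k \<le> N" "0 \<le> s" for k s
      unfolding D_def D'_def using that N by (intro has_vector_derivative_diff dvel) auto
    have vc: "spec_norm (D' k s) \<le> K2 * (exp 1 * ((\<Sum>j\<in>{1..N}. spec_norm (D j s)) / real N + rho / real N))"
      if "1 \<le> k" "k \<le> N" "0 \<le> s" "s \<le> t" for k s
    proof -
      have "spec_norm (D' k s) \<le> K2 * (exp 1 * ((\<Sum>j\<in>{1..N}. spec_norm (D j s)) / real N + (sg + 2) / real N))"
        unfolding D'_def D_def K2_def w_def
      proof (rule vel_compare_clean[OF N])
        show "\<And>k. 1 \<le> k \<Longrightarrow> k \<le> N \<Longrightarrow> spec_norm (th N k s) \<le> 1/2" using bnd N that by auto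
        show "\<And>k. 1 \<le> k \<Longrightarrow> k \<le> 2*N \<Longrightarrow> spec_norm (th (2*N) k s) \<le> 1/2" using bnd N that by auto
        show "spec_norm (th (2*N) (j+1) s - th (2*N) j s) \<le> sg / real (2*N)" if "1 \<le> j" "j + 1 \<le> 2*N" for j
        proof -
          have "spec_norm (th (2*N) (j+1) s - th (2*N) j s) \<le> (C0 + K1 * s) / real (2*N)"
            using smooth[of "2*N" j s] that N \<open>0 \<le> s\<close> by auto
          also have "\<dots> \<le> sg / real (2*N)" unfolding sg_def
            using K10 \<open>s \<le> t\<close> N by (intro divide_right_mono add_left_mono mult_left_mono) auto
          finally show ?thesis .
        qed
      qed (use sg0 that in auto)
      then show ?thesis by (simp add: rho_def)
    qed
    define V where "V s = (\<Sum>k\<in>{1..N}. D k s \<bullet> D k s)" for s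
    define V' where "V' s = (\<Sum>k\<in>{1..N}. 2 * (D k s \<bullet> D' k s))" for s
    have dV: "(V has_vector_derivative V' s) (at s within {0..})" if "0 \<le> s" for s
    proof -
      have "((\<lambda>s. \<Sum>k\<in>{1..N}. D k s \<bullet> D k s) has_vector_derivative (\<Sum>k\<in>{1..N}. D k s \<bullet> D' k s + D' k s \<bullet> D k s)) (at s within {0..})"
        by (intro has_vector_derivative_sum bounded_bilinear.has_vector_derivative[OF bounded_bilinear_inner] dD)
           (use that in auto)
      then show ?thesis unfolding V_def V'_def by (simp add: inner_commute)
    qed
    have V0: "0 \<le> V s" for s unfolding V_def by (intro sum_nonneg) auto
    have Vn: "V s = (\<Sum>k\<in>{1..N}. (norm (D k s))^2)" for s
      unfolding V_def by (simp add: power2_norm_eq_inner)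
    define a where "a s = (\<Sum>k\<in>{1..N}. norm (D k s))" for s
    have a0: "0 \<le> a s" for s unfolding a_def by (intro sum_nonneg) auto
    have aV: "(a s)^2 \<le> real N * V s" for s
      unfolding a_def Vn using sum_sq_cs[of "{1..N}" "\<lambda>k. norm (D k s)"] by simp
    have Dd_a: "(\<Sum>j\<in>{1..N}. spec_norm (D j s)) \<le> a s" for s
      unfolding a_def by (intro sum_mono spec_le_norm)
    have normD': "norm (D' k s) \<le> K3 * (a s + rho) / real N"
      if "1 \<le> k" "k \<le> N" "0 \<le> s" "s \<le> t" for k s
    proof -
      have "norm (D' k s) \<le> sqrt dd * spec_norm (D' k s)" unfolding dd_def by (rule norm_le_spec)
      also have "\<dots> \<le> sqrt dd * (K2 * (exp 1 * ((\<Sum>j\<in>{1..N}. spec_norm (D j s)) / real N + rho / real N)))"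
        using dd0 by (intro mult_left_mono vc that) auto
      also have "\<dots> \<le> sqrt dd * (K2 * (exp 1 * (a s / real N + rho / real N)))"
        using K20 Dd_a[of s] dd0 by (intro mult_left_mono add_right_mono divide_right_mono) auto
      also have "\<dots> = K3 * (a s + rho) / real N" unfolding K3_def by (simp add: algebra_simps add_divide_distrib)
      finally show ?thesis .
    qed
    have V'b: "V' s \<le> al * V s + K3 * rho^2 / real N" if "0 \<le> s" "s \<le> t" for s
    proof -
      have "V' s \<le> (\<Sum>k\<in>{1..N}. 2 * (norm (D k s) * (K3 * (a s + rho) / real N)))"
        unfolding V'_def
      proof (rule sum_mono)
        fix k assume k: "k \<in> {1..N}"
        have "D k s \<bullet> D' k s \<le> norm (D k s) * norm (D' k s)" by (rule norm_cauchy_schwarz)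
        also have "\<dots> \<le> norm (D k s) * (K3 * (a s + rho) / real N)"
          using k that by (intro mult_left_mono normD') auto
        finally show "2 * (D k s \<bullet> D' k s) \<le> 2 * (norm (D k s) * (K3 * (a s + rho) / real N))" by simp
      qed
      also have "\<dots> = (\<Sum>k\<in>{1..N}. (2 * (K3 * (a s + rho) / real N)) * norm (D k s))"
        by (intro sum.cong refl) (simp add: algebra_simps)
      also have "\<dots> = (2 * (K3 * (a s + rho) / real N)) * a s"
        unfolding a_def by (rule sum_distrib_left[symmetric])
      also have "\<dots> = 2 * K3 * (a s * a s + a s * rho) / real N"
        by (simp add: algebra_simps)
      also have "\<dots> \<le> K3 * (3 * (a s)^2 + rho^2) / real N"
      proof -
        have "2 * (a s * rho) \<le> (a s)^2 + rho^2" using sum_squares_bound[of "a s" rho] by (simp add: mult.assoc)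
        then have "2 * (a s * a s + a s * rho) \<le> 3 * (a s)^2 + rho^2"
          by (simp add: power2_eq_square)
        then have "K3 * (2 * (a s * a s + a s * rho)) \<le> K3 * (3 * (a s)^2 + rho^2)"
          using K30 by (rule mult_left_mono)
        then have "2 * K3 * (a s * a s + a s * rho) \<le> K3 * (3 * (a s)^2 + rho^2)"
          by (simp add: mult.assoc mult.left_commute)
        then show ?thesis using Np by (simp add: divide_right_mono)
      qed
      also have "\<dots> \<le> K3 * (3 * (real N * V s) + rho^2) / real N"
        using K30 aV[of s] Np by (intro divide_right_mono mult_left_mono) auto
      also have "\<dots> = 3 * K3 * V s + K3 * rho^2 / real N" using Np by (simp add: field_simps)
      also have "\<dots> \<le> al * V s + K3 * rho^2 / real N"
        unfolding al_def using V0[of s] by (simp add: algebra_simps)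
      finally show ?thesis .
    qed
    define be where "be = K3 * rho^2 / real N"
    have be0: "0 \<le> be" unfolding be_def using K30 by simp
    have Vb: "V s \<le> exp (al * s) * (V 0 + be / al)" if "0 \<le> s" "s \<le> t" for s
    proof -
      have "(\<lambda>r. exp (- al * r) * (V r + be / al)) s \<le> (\<lambda>r. exp (- al * r) * (V r + be / al)) 0"
      proof (rule mono_from_deriv[OF that(1)])
        fix r assume r: "r \<in> {0..s}"
        have "((\<lambda>r. exp (- al * r) * (V r + be / al)) has_real_derivative
            (exp (- al * r) * (- al) * (V r + be / al) + V' r * exp (- al * r))) (at r within {0..})"
        proof -
          have "(V has_real_derivative V' r) (at r within {0..})"
            using dV[of r] r by (simp add: has_real_derivative_iff_has_vector_derivative)
          then have dV1: "((\<lambda>r. V r + be / al) has_real_derivative V' r) (at r within {0..})"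
            by (auto intro!: derivative_eq_intros)
          have dE1: "((\<lambda>r. exp (- al * r)) has_real_derivative (exp (- al * r) * (- al))) (at r within {0..})"
            by (auto intro!: derivative_eq_intros)
          show ?thesis
            by (rule DERIV_mult'[OF dE1 dV1, THEN DERIV_cong]) (simp add: algebra_simps)
        qed
        then show "((\<lambda>r. exp (- al * r) * (V r + be / al)) has_vector_derivative
            (exp (- al * r) * (- al) * (V r + be / al) + V' r * exp (- al * r))) (at r within {0..})"
          by (simp add: has_real_derivative_iff_has_vector_derivative)
        have "V' r - al * V r - be \<le> 0" using V'b[of r] r that by (simp add: be_def)
        then have "exp (- al * r) * (V' r - al * V r - be) \<le> 0" by (simp add: mult_nonneg_nonpos)
        moreover have "exp (- al * r) * (- al) * (V r + be / al) + V' r * exp (- al * r) =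
            exp (- al * r) * (V' r - al * V r - be)" using al0 by (simp add: field_simps)
        ultimately show "exp (- al * r) * (- al) * (V r + be / al) + V' r * exp (- al * r) \<le> 0" by simp
      qed
      then have "exp (- al * s) * (V s + be / al) \<le> V 0 + be / al" by simp
      then have "exp (al * s) * (exp (- al * s) * (V s + be / al)) \<le> exp (al * s) * (V 0 + be / al)"
        by (intro mult_left_mono) auto
      then have "V s + be / al \<le> exp (al * s) * (V 0 + be / al)"
        by (simp add: mult.assoc[symmetric] exp_add[symmetric])
      moreover have "0 \<le> be / al" using be0 al0 by simp
      ultimately show ?thesis by linarith
    qed
    have V00: "V 0 \<le> dd * C^2 / real N"
    proof -
      have "(norm (D k 0))^2 \<le> (sqrt dd * (C / real N))^2" if "k \<in> {1..N}" for k
      proof -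
        have "norm (D k 0) \<le> sqrt dd * spec_norm (D k 0)" unfolding dd_def by (rule norm_le_spec)
        also have "\<dots> \<le> sqrt dd * (C / real N)"
          unfolding D_def using sc0[OF N0] that dd0 by (intro mult_left_mono) auto
        finally show ?thesis by (intro power_mono) (auto simp: dd0)
      qed
      then have "V 0 \<le> (\<Sum>k\<in>{1..N}. (sqrt dd * (C / real N))^2)"
        unfolding Vn by (rule sum_mono)
      also have "\<dots> = dd * C^2 / real N"
        using Np by (simp add: dd_def power_mult_distrib power2_eq_square field_simps)
      finally show ?thesis .
    qed
    have VK4: "V s \<le> K4 / real N" if "0 \<le> s" "s \<le> t" for s
    proof -
      have "V s \<le> exp (al * s) * (V 0 + be / al)" by (rule Vb[OF that])
      also have "\<dots> \<le> exp (al * t) * (dd * C^2 / real N + be / al)"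
        using that al0 V0[of 0] be0 V00 by (intro mult_mono add_right_mono) auto
      also have "\<dots> = K4 / real N" unfolding K4_def be_def using Np al0 by (simp add: field_simps)
      finally show ?thesis .
    qed
    have aK4: "a s \<le> sqrt K4" if "0 \<le> s" "s \<le> t" for s
    proof -
      have "real N * V s \<le> real N * (K4 / real N)"
        using VK4[OF that] Np by (intro mult_left_mono) auto
      then have "(a s)^2 \<le> real N * (K4 / real N)"
        using aV[of s] by linarith
      then have "(a s)^2 \<le> K4" using Np by simp
      then show ?thesis using a0[of s] real_le_rsqrt by blast
    qed
    have "spec_norm (D n t - D n 0) \<le> (K2 * exp 1 * (sqrt K4 + rho) / real N) * t"
    proof (rule spec_drift_const[OF t])
      fix s assume s: "s \<in> {0..t}"
      show "((\<lambda>s. D n s) has_vector_derivative D' n s) (at s within {0..})" using n s by (intro dD) auto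
      have "spec_norm (D' n s) \<le> K2 * (exp 1 * ((\<Sum>j\<in>{1..N}. spec_norm (D j s)) / real N + rho / real N))"
        using n s by (intro vc) auto
      also have "\<dots> \<le> K2 * (exp 1 * (sqrt K4 / real N + rho / real N))"
        using K20 s Dd_a[of s] aK4[of s] Np
        by (intro mult_left_mono add_right_mono divide_right_mono) auto
      also have "\<dots> = K2 * exp 1 * (sqrt K4 + rho) / real N" by (simp add: algebra_simps add_divide_distrib)
      finally show "spec_norm (D' n s) \<le> K2 * exp 1 * (sqrt K4 + rho) / real N" .
    qed
    moreover have "spec_norm (D n 0) \<le> C / real N" unfolding D_def using sc0[OF N0] n by auto
    moreover have "spec_norm (D n t) \<le> spec_norm (D n 0) + spec_norm (D n t - D n 0)"
      using spec_norm_add[of "D n 0" "D n t - D n 0"] by simp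
    ultimately have "spec_norm (D n t) \<le> C / real N + (K2 * exp 1 * (sqrt K4 + rho) / real N) * t" by linarith
    also have "\<dots> = C' / real N" unfolding C'_def by (simp add: algebra_simps add_divide_distrib)
    finally show "spec_norm (th N n t - th (2*N) (2*n) t) \<le> C' / real N" by (simp add: D_def)
  qed
qed

theorem lemma2:
  fixes S B :: "real^'d::finite^'d"
    and M m :: real
    and theta :: "nat \<Rightarrow> nat \<Rightarrow> real \<Rightarrow> real^'d^'d"
  assumes Sigma_sym: "transpose S = S"
    and Sigma_pd: "\<forall>x. x \<noteq> 0 \<longrightarrow> x \<bullet> (S *v x) > 0"
    and M_eig: "is_eigenvalue S M" and M_max: "\<forall>lam. is_eigenvalue S lam \<longrightarrow> lam \<le> M"
    and m_eig: "is_eigenvalue S m" and m_min: "\<forall>lam. is_eigenvalue S lam \<longrightarrow> m \<le> lam"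
    and M_pos: "M > 0" and m_pos: "m > 0"
    and flow: "\<forall>N\<ge>1. \<forall>n\<in>{1..N}. \<forall>t\<ge>0. \<exists>G.
        ((\<lambda>X. loss S B N (\<lambda>k. if k = n then X else theta N k t)) has_derivative (\<lambda>H. G \<bullet> H))
          (at (theta N n t))
        \<and> ((\<lambda>s. theta N n s) has_vector_derivative (- (real N *\<^sub>R G))) (at t within {0..})"
    and init_loss: "\<forall>N\<ge>1. sqrt (loss S B N (\<lambda>k. theta N k 0)) < m / (4 * sqrt (2 * M * exp 3))"
    and init_bound: "\<forall>N\<ge>1. \<forall>n\<in>{1..N}. spec_norm (theta N n 0) \<le> 1/4"
    and init_smooth: "\<exists>C0>0. \<forall>N\<ge>1. \<forall>n. 1 \<le> n \<and> n + 1 \<le> N \<longrightarrow>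
        spec_norm (theta N (n+1) 0 - theta N n 0) \<le> C0 / real N"
    and init_scaling: "\<exists>C N0. \<forall>N\<ge>N0. \<forall>n\<in>{1..N}.
        spec_norm (theta N n 0 - theta (2*N) (2*n) 0) \<le> C / real N"
  shows "\<forall>t\<ge>0. \<exists>C N0. \<forall>N\<ge>N0. \<forall>n\<in>{1..N}.
        spec_norm (theta N n t - theta (2*N) (2*n) t) \<le> C / real N"
proof (intro allI impI)
  fix t :: real assume t: "0 \<le> t"
  have psd: "0 \<le> y \<bullet> (S *v y)" for y
    using Sigma_pd by (cases "y = 0") (auto simp: less_imp_le)
  have dvel: "((\<lambda>s. theta N n s) has_vector_derivative vel S B N (\<lambda>k. theta N k t) n) (at t within {0..})"
    if "1 \<le> N" "1 \<le> n" "n \<le> N" "0 \<le> t" for N n t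
    by (rule flow_vel[OF Sigma_sym flow that])
  have bnd: "spec_norm (theta N n s) \<le> 1/2" if N: "1 \<le> N" and n: "1 \<le> n" "n \<le> N" and s: "0 \<le> s" for N n s
  proof -
    interpret traj S B m M N "theta N"
      using Sigma_sym m_min M_max m_pos M_pos psd N dvel by unfold_locales auto
    show ?thesis
    proof (rule boot[OF _ _ s n])
      show "\<And>n. 1 \<le> n \<Longrightarrow> n \<le> N \<Longrightarrow> spec_norm (theta N n 0) \<le> 1/4" using init_bound N by auto
      show "sqrt (ell 0) < m / (4 * sqrt (2 * M * exp 3))" unfolding ell_def using init_loss N by auto
    qed
  qed
  obtain C0 where C0: "0 < C0" and sm0: "\<forall>N\<ge>1. \<forall>n. 1 \<le> n \<and> n + 1 \<le> N \<longrightarrow>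
        spec_norm (theta N (n+1) 0 - theta N n 0) \<le> C0 / real N" using init_smooth by blast
  obtain C N0 where sc0: "\<forall>N\<ge>N0. \<forall>n\<in>{1..N}. spec_norm (theta N n 0 - theta (2*N) (2*n) 0) \<le> C / real N"
    using init_scaling by blast
  obtain C' where C': "\<forall>N \<ge> max N0 1. \<forall>n\<in>{1..N}. spec_norm (theta N n t - theta (2*N) (2*n) t) \<le> C' / real N"
  proof -
    have "\<exists>C'. \<forall>N \<ge> max N0 1. \<forall>n\<in>{1..N}. spec_norm (theta N n t - theta (2*N) (2*n) t) \<le> C' / real N"
    proof (rule part2[OF dvel bnd C0 _ _ t])
      show "\<And>N n. 1 \<le> N \<Longrightarrow> 1 \<le> n \<Longrightarrow> n + 1 \<le> N \<Longrightarrow> spec_norm (theta N (n+1) 0 - theta N n 0) \<le> C0 / real N"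
        using sm0 by auto
      show "\<And>N n. N0 \<le> N \<Longrightarrow> 1 \<le> n \<Longrightarrow> n \<le> N \<Longrightarrow> spec_norm (theta N n 0 - theta (2*N) (2*n) 0) \<le> C / real N"
        using sc0 by auto
    qed
    then show ?thesis using that by blast
  qed
  then show "\<exists>C N0. \<forall>N\<ge>N0. \<forall>n\<in>{1..N}. spec_norm (theta N n t - theta (2*N) (2*n) t) \<le> C / real N"
    by blast
qed

end
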